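(* In the setting described in the context, for every $t\in\mathbb{Z}_+$, $k\in[t]$ and $\delta\in(0,1)$, $$\mathbb{P}\big(\psi(t,k,\delta)\le\widehat\psi(t,k,\delta)\big)\ge 1-\delta\quad\text{and}\quad \mathbb{P}\big(\widehat\psi(t,k,\delta)\le \psi(t,k,\delta)+\xi(t,k,\delta)\big)\ge 1-\delta,$$ where $$\xi(t,k,\delta)=\begin{cases}0, & B_{t,k}=1,\\ \sqrt{\frac{4\log(2/\delta)}{B_{t,k}}}\max_{t-k+1\le j\le t}|\mu_j-\mu_t|+\frac{13(b-a)\log(2/\delta)}{3(B_{t,k}-1)}, & B_{t,k}\ge 2.\end{cases}$$
   Context: Let $a<b$ be real numbers, $M=b-a$, and $t\in\mathbb{Z}_+$. For each $j\in[t]$ let $\mathcal{Q}_j$ be a probability distribution on $[a,b]$ with mean $\mu_j$ and variance $\sigma_j^2$, and let $B_j\ge 1$ be an integer. The data are $\mathcal{D}_j=\{u_{j,i}\}_{i=1}^{B_j}$, $j\in[t]$, where all $u_{j,i}$ are mutually independent and $u_{j,i}\sim\mathcal{Q}_j$. For $k\in[t]$ define $B_{t,k}=\sum_{j=t-k+1}^t B_j$, $\sigma_{t,k}^2=\frac{1}{B_{t,k}}\sum_{j=t-k+1}^t B_j\sigma_j^2$, $\widehat{\mu}_{t,k}=\frac{1}{B_{t,k}}\sum_{j=t-k+1}^t\sum_{i=1}^{B_j}u_{j,i}$, and when $B_{t,k}\ge2$ the sample variance $\widehat v_{t,k}^2=\frac{1}{B_{t,k}-1}\sum_{j=t-k+1}^t\sum_{i=1}^{B_j}(u_{j,i}-\widehat\mu_{t,k})^2$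 (with $\widehat v_{t,k}\ge 0$). For $\delta\in(0,1)$ define $$\psi(t,k,\delta)=\begin{cases} M, & B_{t,k}=1,\\ \sigma_{t,k}\sqrt{\frac{2\log(2/\delta)}{B_{t,k}}}+\frac{2M\log(2/\delta)}{3B_{t,k}}, & B_{t,k}\ge 2,\end{cases}\qquad \widehat\psi(t,k,\delta)=\begin{cases} M, & B_{t,k}=1,\\ \widehat v_{t,k}\sqrt{\frac{2\log(2/\delta)}{B_{t,k}}}+\frac{8M\log(2/\delta)}{3(B_{t,k}-1)}, & B_{t,k}\ge 2.\end{cases}$$ *)

theory Defs
  imports "HOL-Probability.Probability"
begin

definition dmean :: "real measure \<Rightarrow> real" where
  "dmean Q = (\<integral>x. x \<partial>Q)"

definition dvar :: "real measure \<Rightarrow> real" where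
  "dvar Q = (\<integral>x. (x - dmean Q)^2 \<partial>Q)"

definition Btk :: "(nat \<Rightarrow> nat) \<Rightarrow> nat \<Rightarrow> nat \<Rightarrow> nat" where
  "Btk B t k = (\<Sum>j\<in>{t-k+1..t}. B j)"

definition sigma2tk :: "(nat \<Rightarrow> real measure) \<Rightarrow> (nat \<Rightarrow> nat) \<Rightarrow> nat \<Rightarrow> nat \<Rightarrow> real" where
  "sigma2tk Q B t k = (\<Sum>j\<in>{t-k+1..t}. real (B j) * dvar (Q j)) / real (Btk B t k)"

definition muhat :: "(nat \<Rightarrow> nat \<Rightarrow> 'a \<Rightarrow> real) \<Rightarrow> (nat \<Rightarrow> nat) \<Rightarrow> nat \<Rightarrow> nat \<Rightarrow> 'a \<Rightarrow> real" where
  "muhat u B t k \<omega> = (\<Sum>j\<in>{t-k+1..t}. \<Sum>i\<in>{1..B j}. u j i \<omega>) / real (Btk B t k)"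

definition vhat :: "(nat \<Rightarrow> nat \<Rightarrow> 'a \<Rightarrow> real) \<Rightarrow> (nat \<Rightarrow> nat) \<Rightarrow> nat \<Rightarrow> nat \<Rightarrow> 'a \<Rightarrow> real" where
  "vhat u B t k \<omega> = sqrt ((\<Sum>j\<in>{t-k+1..t}. \<Sum>i\<in>{1..B j}. (u j i \<omega> - muhat u B t k \<omega>)^2)
                          / (real (Btk B t k) - 1))"

definition psi :: "real \<Rightarrow> (nat \<Rightarrow> real measure) \<Rightarrow> (nat \<Rightarrow> nat) \<Rightarrow> nat \<Rightarrow> nat \<Rightarrow> real \<Rightarrow> real" where
  "psi M Q B t k \<delta> =
     (if Btk B t k = 1 then M
      else sqrt (sigma2tk Q B t k) * sqrt (2 * ln (2 / \<delta>) / real (Btk B t k))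
           + 2 * M * ln (2 / \<delta>) / (3 * real (Btk B t k)))"

definition psihat :: "real \<Rightarrow> (nat \<Rightarrow> nat \<Rightarrow> 'a \<Rightarrow> real) \<Rightarrow> (nat \<Rightarrow> nat) \<Rightarrow> nat \<Rightarrow> nat \<Rightarrow> real \<Rightarrow> 'a \<Rightarrow> real" where
  "psihat M u B t k \<delta> \<omega> =
     (if Btk B t k = 1 then M
      else vhat u B t k \<omega> * sqrt (2 * ln (2 / \<delta>) / real (Btk B t k))
           + 8 * M * ln (2 / \<delta>) / (3 * (real (Btk B t k) - 1)))"

definition xi :: "real \<Rightarrow> (nat \<Rightarrow> real measure) \<Rightarrow> (nat \<Rightarrow> nat) \<Rightarrow> nat \<Rightarrow> nat \<Rightarrow> real \<Rightarrow> real" where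
  "xi M Q B t k \<delta> =
     (if Btk B t k = 1 then 0
      else sqrt (4 * ln (2 / \<delta>) / real (Btk B t k))
             * Max ((\<lambda>j. \<bar>dmean (Q j) - dmean (Q t)\<bar>) ` {t-k+1..t})
           + 13 * M * ln (2 / \<delta>) / (3 * (real (Btk B t k) - 1)))"

end

theory Submission
  imports Defs
begin

lemma perm_swap_first:
  fixes F :: "nat \<Rightarrow> nat \<Rightarrow> real"
  assumes a: "a < n" "b < n" "a \<noteq> b" "c < n" "c \<noteq> b"
  shows "(\<Sum>p\<in>{p. p permutes {..<n}}. F (p a) (p b)) = (\<Sum>p\<in>{p. p permutes {..<n}}. F (p c) (p b))"
proof -
  have q: "Transposition.transpose a c permutes {..<n}" using a by (intro permutes_swap_id) auto
  have "(\<Sum>p\<in>{p. p permutes {..<n}}. F (p c) (p b)) =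
        (\<Sum>p\<in>{p. p permutes {..<n}}. F ((p \<circ> Transposition.transpose a c) c) ((p \<circ> Transposition.transpose a c) b))"
    by (rule sum_permutations_compose_right[OF q])
  also have "\<dots> = (\<Sum>p\<in>{p. p permutes {..<n}}. F (p a) (p b))"
    using a by (simp add: transpose_def)
  finally show ?thesis by simp
qed

lemma perm_G_const:
  fixes F :: "nat \<Rightarrow> nat \<Rightarrow> real"
  assumes sym: "\<And>i j. F i j = F j i" and ab: "a < n" "b < n" "a \<noteq> b"
  shows "(\<Sum>p\<in>{p. p permutes {..<n}}. F (p a) (p b)) = (\<Sum>p\<in>{p. p permutes {..<n}}. F (p 0) (p 1))"
proof -
  define G where "G = (\<lambda>a b. (\<Sum>p\<in>{p. p permutes {..<n}}. F (p a) (p b)))"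
  have symG: "G x y = G y x" for x y unfolding G_def by (simp add: sym)
  have n: "2 \<le> n" using ab by auto
  have main: "G x y = G 0 1" if xy: "x < n" "y < n" "x \<noteq> y" "x \<noteq> 1" for x y
  proof -
    have "G x y = G y x" by (rule symG)
    also have "\<dots> = G 1 x" unfolding G_def using xy n by (intro perm_swap_first) auto
    also have "\<dots> = G x 1" by (rule symG)
    also have "\<dots> = G 0 1" unfolding G_def using xy n by (intro perm_swap_first) auto
    finally show ?thesis .
  qed
  show ?thesis
  proof (cases "a = 1")
    case True
    have "G a b = G b a" by (rule symG)
    also have "\<dots> = G 0 1" using True ab by (intro main) auto
    finally show ?thesis unfolding G_def .
  next
    case False
    then show ?thesis using main[of a b] ab unfolding G_def by auto
  qed
qed

lemma perm_avg:
  fixes F :: "nat \<Rightarrow> nat \<Rightarrow> real"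
  assumes sym: "\<And>i j. F i j = F j i" and n: "2 \<le> n"
  shows "(\<Sum>p\<in>{p. p permutes {..<n}}. \<Sum>k<n div 2. F (p (2*k)) (p (2*k+1)))
       = real (n div 2) * (fact n / (real n * (real n - 1))) * (\<Sum>i<n. \<Sum>j<n. if i = j then 0 else F i j)"
proof -
  define P where "P = {p. p permutes {..<n}}"
  define G where "G = (\<lambda>a b. (\<Sum>p\<in>P. F (p a) (p b)))"
  define S where "S = (\<Sum>i<n. \<Sum>j<n. if i = j then 0 else F i j)"
  have finP: "finite P" unfolding P_def by (intro finite_permutations) auto
  have cardP: "card P = fact n" unfolding P_def by (intro card_permutations) auto
  have Gc: "G x y = G 0 1" if "x < n" "y < n" "x \<noteq> y" for x y
    unfolding G_def P_def using that by (intro perm_G_const sym)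
  have "(\<Sum>p\<in>P. \<Sum>k<n div 2. F (p (2*k)) (p (2*k+1))) = (\<Sum>k<n div 2. G (2*k) (2*k+1))"
    unfolding G_def by (rule sum.swap)
  also have "\<dots> = (\<Sum>k<n div 2. G 0 1)"
    by (intro sum.cong refl Gc) auto
  also have "\<dots> = real (n div 2) * G 0 1" by simp
  finally have L: "(\<Sum>p\<in>P. \<Sum>k<n div 2. F (p (2*k)) (p (2*k+1))) = real (n div 2) * G 0 1" .
  have "(\<Sum>i<n. \<Sum>j<n. if i = j then 0 else G i j) = (\<Sum>i<n. \<Sum>j<n. if i = j then 0 else G 0 1)"
  proof (intro sum.cong refl)
    fix i j assume "i \<in> {..<n}" "j \<in> {..<n}"
    then show "(if i = j then 0 else G i j) = (if i = j then 0 else G 0 1)" using Gc[of i j] by auto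
  qed
  also have "\<dots> = (\<Sum>i<n. (real n - 1) * G 0 1)"
  proof (intro sum.cong refl)
    fix i assume i: "i \<in> {..<n}"
    have "(\<Sum>j<n. if i = j then 0 else G 0 1) = (\<Sum>j\<in>{..<n}-{i}. if i = j then 0 else G 0 1)"
      by (subst sum.remove[of _ i]) (use i in auto)
    also have "\<dots> = (\<Sum>j\<in>{..<n}-{i}. G 0 1)" by (rule sum.cong) auto
    also have "\<dots> = real (card ({..<n}-{i})) * G 0 1" by simp
    also have "card ({..<n}-{i}) = n - 1" using i by (simp add: card_Diff_singleton)
    finally show "(\<Sum>j<n. if i = j then 0 else G 0 1) = (real n - 1) * G 0 1" using n by (simp add: of_nat_diff)
  qed
  also have "\<dots> = real n * (real n - 1) * G 0 1" by simp
  finally have A: "(\<Sum>i<n. \<Sum>j<n. if i = j then 0 else G i j) = real n * (real n - 1) * G 0 1" .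
  have "(\<Sum>i<n. \<Sum>j<n. if i = j then 0 else G i j) = (\<Sum>i<n. \<Sum>j<n. \<Sum>p\<in>P. if i = j then 0 else F (p i) (p j))"
    unfolding G_def by (intro sum.cong refl) auto
  also have "\<dots> = (\<Sum>i<n. \<Sum>p\<in>P. \<Sum>j<n. if i = j then 0 else F (p i) (p j))"
    by (intro sum.cong refl sum.swap)
  also have "\<dots> = (\<Sum>p\<in>P. \<Sum>i<n. \<Sum>j<n. if i = j then 0 else F (p i) (p j))"
    by (rule sum.swap)
  also have "\<dots> = (\<Sum>p\<in>P. S)"
  proof (intro sum.cong refl)
    fix p assume p: "p \<in> P"
    then have bij: "bij_betw p {..<n} {..<n}" unfolding P_def by (auto intro: permutes_imp_bij)
    then have inj: "inj_on p {..<n}" by (rule bij_betw_imp_inj_on)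
    have "(\<Sum>i<n. \<Sum>j<n. if i = j then 0 else F (p i) (p j)) = (\<Sum>i<n. \<Sum>j<n. (\<lambda>x y. if x = y then 0 else F x y) (p i) (p j))"
      using inj by (intro sum.cong refl) (auto simp: inj_on_def)
    also have "\<dots> = (\<Sum>i<n. \<Sum>j<n. (\<lambda>x y. if x = y then 0 else F x y) (p i) j)"
      by (intro sum.cong refl sum.reindex_bij_betw[OF bij])
    also have "\<dots> = S" unfolding S_def
      by (rule sum.reindex_bij_betw[OF bij, where g="\<lambda>x. \<Sum>j<n. (\<lambda>x y. if x = y then 0 else F x y) x j"])
    finally show "(\<Sum>i<n. \<Sum>j<n. if i = j then 0 else F (p i) (p j)) = S" .
  qed
  also have "\<dots> = fact n * S" using cardP by simp
  finally have B: "real n * (real n - 1) * G 0 1 = fact n * S" using A by simp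
  have nn: "real n * (real n - 1) > 0" using n by auto
  have "G 0 1 = fact n * S / (real n * (real n - 1))" using B nn by (metis nonzero_mult_div_cancel_left less_irrefl)
  then show ?thesis using L unfolding P_def S_def by simp
qed

lemma exp_neg_le_quad:
  fixes x :: real assumes x: "0 \<le> x"
  shows "exp (-x) \<le> 1 - x + x\<^sup>2 / 2"
proof -
  define g where "g = (\<lambda>x::real. 1 - x + x\<^sup>2 / 2 - exp (-x))"
  have d: "(g has_real_derivative (-1 + y + exp (-y))) (at y)" for y
    unfolding g_def by (auto intro!: derivative_eq_intros simp: power2_eq_square)
  have "g 0 \<le> g x"
  proof (rule DERIV_nonneg_imp_nondecreasing[OF x])
    fix y :: real assume "0 \<le> y" "y \<le> x"
    have "1 - y \<le> exp (-y)" using exp_ge_add_one_self[of "-y"] by simp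
    then show "\<exists>y'. (g has_real_derivative y') (at y) \<and> 0 \<le> y'"
      using d[of y] by (intro exI[of _ "-1 + y + exp (-y)"]) auto
  qed
  then show ?thesis unfolding g_def by simp
qed

context prob_space begin

lemma integrable_AE_bounded:
  fixes f :: "'a \<Rightarrow> real"
  assumes "f \<in> borel_measurable M" "AE x in M. \<bar>f x\<bar> \<le> C"
  shows "integrable M f"
  using assms by (intro integrable_const_bound[where B=C]) auto

lemma mgf_upper:
  fixes Z :: "'a \<Rightarrow> real"
  assumes Zm: "Z \<in> borel_measurable M" and Zb: "AE x in M. 0 \<le> Z x \<and> Z x \<le> K"
    and s: "0 \<le> s" "s * K \<le> 1"
  shows "expectation (\<lambda>x. exp (s * Z x)) \<le> exp ((s + s\<^sup>2 * K) * expectation Z)"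
proof -
  have "AE x in M. 0 \<le> K" using Zb by (rule eventually_mono) auto
  then have K: "0 \<le> K" by (simp add: AE_const)
  have intZ: "integrable M Z" using Zm Zb by (intro integrable_AE_bounded[where C=K]) auto
  have intE: "integrable M (\<lambda>x. exp (s * Z x))"
  proof (rule integrable_AE_bounded[where C="exp (s*K)"])
    show "(\<lambda>x. exp (s * Z x)) \<in> borel_measurable M" using Zm by measurable
    show "AE x in M. \<bar>exp (s * Z x)\<bar> \<le> exp (s * K)"
      using Zb
    proof (rule eventually_mono)
      fix x assume "0 \<le> Z x \<and> Z x \<le> K"
      then have "s * Z x \<le> s * K" using s by (intro mult_left_mono) auto
      then show "\<bar>exp (s * Z x)\<bar> \<le> exp (s * K)" by simp
    qed
  qed
  have "expectation (\<lambda>x. exp (s * Z x)) \<le> expectation (\<lambda>x. 1 + (s + s\<^sup>2 * K) * Z x)"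
  proof (rule integral_mono_AE[OF intE])
    show "integrable M (\<lambda>x. 1 + (s + s\<^sup>2 * K) * Z x)" using intZ by auto
    show "AE x in M. exp (s * Z x) \<le> 1 + (s + s\<^sup>2 * K) * Z x"
      using Zb
    proof (rule eventually_mono)
      fix x assume z: "0 \<le> Z x \<and> Z x \<le> K"
      have sz: "0 \<le> s * Z x" "s * Z x \<le> 1" using z s mult_left_mono[of "Z x" K s] by auto
      have "exp (s * Z x) \<le> 1 + s * Z x + (s * Z x)\<^sup>2" by (rule exp_bound[OF sz])
      also have "(s * Z x)\<^sup>2 = s\<^sup>2 * (Z x * Z x)" by (simp add: power2_eq_square)
      also have "\<dots> \<le> s\<^sup>2 * (K * Z x)" using z by (intro mult_left_mono mult_right_mono) auto
      finally show "exp (s * Z x) \<le> 1 + (s + s\<^sup>2 * K) * Z x" by (simp add: algebra_simps)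
    qed
  qed
  also have "\<dots> = 1 + (s + s\<^sup>2 * K) * expectation Z" using intZ by (simp add: prob_space)
  also have "\<dots> \<le> exp ((s + s\<^sup>2 * K) * expectation Z)" by (rule exp_ge_add_one_self[THEN order.trans[rotated]]) simp
  finally show ?thesis .
qed

lemma mgf_lower:
  fixes Z :: "'a \<Rightarrow> real"
  assumes Zm: "Z \<in> borel_measurable M" and Zb: "AE x in M. 0 \<le> Z x \<and> Z x \<le> K"
    and s: "0 \<le> s"
  shows "expectation (\<lambda>x. exp (- s * Z x)) \<le> exp (- (s - s\<^sup>2 * K / 2) * expectation Z)"
proof -
  have intZ: "integrable M Z" using Zm Zb by (intro integrable_AE_bounded[where C=K]) auto
  have intE: "integrable M (\<lambda>x. exp (- s * Z x))"
  proof (rule integrable_AE_bounded[where C="1"])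
    show "(\<lambda>x. exp (- s * Z x)) \<in> borel_measurable M" using Zm by measurable
    show "AE x in M. \<bar>exp (- s * Z x)\<bar> \<le> 1"
      using Zb
    proof (rule eventually_mono)
      fix x assume "0 \<le> Z x \<and> Z x \<le> K"
      then have "0 \<le> s * Z x" using s by auto
      then show "\<bar>exp (- s * Z x)\<bar> \<le> 1" by simp
    qed
  qed
  have "expectation (\<lambda>x. exp (- s * Z x)) \<le> expectation (\<lambda>x. 1 - (s - s\<^sup>2 * K / 2) * Z x)"
  proof (rule integral_mono_AE[OF intE])
    show "integrable M (\<lambda>x. 1 - (s - s\<^sup>2 * K / 2) * Z x)" using intZ by auto
    show "AE x in M. exp (- s * Z x) \<le> 1 - (s - s\<^sup>2 * K / 2) * Z x"
      using Zb
    proof (rule eventually_mono)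
      fix x assume z: "0 \<le> Z x \<and> Z x \<le> K"
      have sz: "0 \<le> s * Z x" using z s by auto
      have "exp (- s * Z x) \<le> 1 - s * Z x + (s * Z x)\<^sup>2 / 2" using exp_neg_le_quad[OF sz] by simp
      also have "(s * Z x)\<^sup>2 = s\<^sup>2 * (Z x * Z x)" by (simp add: power2_eq_square)
      also have "\<dots> \<le> s\<^sup>2 * (K * Z x)" using z by (intro mult_left_mono mult_right_mono) auto
      finally show "exp (- s * Z x) \<le> 1 - (s - s\<^sup>2 * K / 2) * Z x" by (simp add: algebra_simps)
    qed
  qed
  also have "\<dots> = 1 - (s - s\<^sup>2 * K / 2) * expectation Z" using intZ by (simp add: prob_space)
  also have "\<dots> \<le> exp (- (s - s\<^sup>2 * K / 2) * expectation Z)" using exp_ge_add_one_self[of "- (s - s\<^sup>2 * K / 2) * expectation Z"] by linarith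
  finally show ?thesis .
qed

end

locale pair_setting = prob_space +
  fixes n :: nat and Y :: "nat \<Rightarrow> 'a \<Rightarrow> real" and a b :: real
  assumes indep: "indep_vars (\<lambda>_. borel) Y {..<n}"
    and bnd: "\<And>r. r < n \<Longrightarrow> AE \<omega> in M. a \<le> Y r \<omega> \<and> Y r \<omega> \<le> b"
    and n2: "2 \<le> n"
begin

definition mu where "mu r = expectation (Y r)"
definition sv where "sv r = expectation (\<lambda>\<omega>. (Y r \<omega> - mu r)\<^sup>2)"
definition H where "H i j \<omega> = (Y i \<omega> - Y j \<omega>)\<^sup>2 / 2"

lemma Ymeas[measurable]: "r < n \<Longrightarrow> Y r \<in> borel_measurable M"
  using indep unfolding indep_vars_def by auto

lemma Hmeas[measurable]: "i < n \<Longrightarrow> j < n \<Longrightarrow> H i j \<in> borel_measurable M"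
  unfolding H_def by measurable

lemma Yabs: assumes "r < n" shows "AE \<omega> in M. \<bar>Y r \<omega>\<bar> \<le> \<bar>a\<bar> + \<bar>b\<bar>"
  using bnd[OF assms] by (rule eventually_mono) auto

lemma intY: "r < n \<Longrightarrow> integrable M (Y r)"
  by (rule integrable_AE_bounded[OF Ymeas Yabs])

lemma intYc: "r < n \<Longrightarrow> integrable M (\<lambda>\<omega>. Y r \<omega> - c)"
  using intY by auto

lemma intY2: "r < n \<Longrightarrow> integrable M (\<lambda>\<omega>. (Y r \<omega> - c)\<^sup>2)"
proof -
  assume r: "r < n"
  show ?thesis
  proof (rule integrable_AE_bounded[where C="(\<bar>a\<bar> + \<bar>b\<bar> + \<bar>c\<bar>)\<^sup>2"])
    show "(\<lambda>\<omega>. (Y r \<omega> - c)\<^sup>2) \<in> borel_measurable M" using r by measurable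
    show "AE x in M. \<bar>(Y r x - c)\<^sup>2\<bar> \<le> (\<bar>a\<bar> + \<bar>b\<bar> + \<bar>c\<bar>)\<^sup>2"
      using Yabs[OF r]
    proof (rule eventually_mono)
      fix x assume "\<bar>Y r x\<bar> \<le> \<bar>a\<bar> + \<bar>b\<bar>"
      then have "\<bar>Y r x - c\<bar> \<le> \<bar>a\<bar> + \<bar>b\<bar> + \<bar>c\<bar>" by linarith
      then have "\<bar>Y r x - c\<bar>\<^sup>2 \<le> (\<bar>a\<bar> + \<bar>b\<bar> + \<bar>c\<bar>)\<^sup>2" by (intro power_mono) auto
      then show "\<bar>(Y r x - c)\<^sup>2\<bar> \<le> (\<bar>a\<bar> + \<bar>b\<bar> + \<bar>c\<bar>)\<^sup>2" by simp
    qed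
  qed
qed

lemma H_bnd: "i < n \<Longrightarrow> j < n \<Longrightarrow> AE \<omega> in M. 0 \<le> H i j \<omega> \<and> H i j \<omega> \<le> (b - a)\<^sup>2 / 2"
proof -
  assume ij: "i < n" "j < n"
  show ?thesis using bnd[OF ij(1)] bnd[OF ij(2)]
  proof eventually_elim
    case (elim \<omega>)
    then have "\<bar>Y i \<omega> - Y j \<omega>\<bar> \<le> \<bar>b - a\<bar>" by linarith
    then have "(Y i \<omega> - Y j \<omega>)\<^sup>2 \<le> (b - a)\<^sup>2" by (simp add: abs_le_square_iff)
    then show ?case unfolding H_def by auto
  qed
qed

lemma mu_centered: "r < n \<Longrightarrow> expectation (\<lambda>\<omega>. Y r \<omega> - mu r) = 0"
  using intY by (simp add: mu_def prob_space)

lemma E_cross: assumes ij: "i < n" "j < n" "i \<noteq> j"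
  shows "expectation (\<lambda>\<omega>. (Y i \<omega> - mu i) * (Y j \<omega> - mu j)) = 0"
proof -
  define X where "X = (\<lambda>r \<omega>. Y r \<omega> - mu r)"
  have ind: "indep_vars (\<lambda>_. borel) X {i, j}"
    unfolding X_def
    by (rule indep_vars_compose2[where X=Y and M'="\<lambda>_. borel", OF indep_vars_subset[OF indep]]) (use ij in auto)
  have "expectation (\<lambda>\<omega>. \<Prod>r\<in>{i,j}. X r \<omega>) = (\<Prod>r\<in>{i,j}. expectation (X r))"
    by (rule indep_vars_lebesgue_integral[OF _ ind]) (use ij in \<open>auto simp: X_def intro!: intYc\<close>)
  then show ?thesis using ij mu_centered unfolding X_def by simp
qed

lemma EH: assumes ij: "i < n" "j < n" "i \<noteq> j"
  shows "expectation (H i j) = (sv i + sv j + (mu i - mu j)\<^sup>2) / 2"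
proof -
  define A where "A \<omega> = Y i \<omega> - mu i" for \<omega>
  define B where "B \<omega> = Y j \<omega> - mu j" for \<omega>
  define d where "d = mu i - mu j"
  have eq: "H i j \<omega> = ((A \<omega>)\<^sup>2 + (B \<omega>)\<^sup>2 + d\<^sup>2 - 2 * (A \<omega> * B \<omega>) + 2 * d * A \<omega> - 2 * d * B \<omega>) / 2" for \<omega>
    unfolding H_def A_def B_def d_def by (simp add: power2_eq_square algebra_simps)
  have iA: "integrable M A" "integrable M (\<lambda>\<omega>. (A \<omega>)\<^sup>2)" unfolding A_def using ij by (auto intro: intYc intY2)
  have iB: "integrable M B" "integrable M (\<lambda>\<omega>. (B \<omega>)\<^sup>2)" unfolding B_def using ij by (auto intro: intYc intY2)
  have iAB: "integrable M (\<lambda>\<omega>. A \<omega> * B \<omega>)"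
  proof (rule integrable_AE_bounded[where C="(\<bar>a\<bar> + \<bar>b\<bar> + \<bar>mu i\<bar>) * (\<bar>a\<bar> + \<bar>b\<bar> + \<bar>mu j\<bar>)"])
    show "(\<lambda>\<omega>. A \<omega> * B \<omega>) \<in> borel_measurable M" unfolding A_def B_def using ij by measurable
    show "AE x in M. \<bar>A x * B x\<bar> \<le> (\<bar>a\<bar> + \<bar>b\<bar> + \<bar>mu i\<bar>) * (\<bar>a\<bar> + \<bar>b\<bar> + \<bar>mu j\<bar>)"
      using Yabs[OF ij(1)] Yabs[OF ij(2)]
    proof eventually_elim
      case (elim x)
      then have "\<bar>A x\<bar> \<le> \<bar>a\<bar> + \<bar>b\<bar> + \<bar>mu i\<bar>" "\<bar>B x\<bar> \<le> \<bar>a\<bar> + \<bar>b\<bar> + \<bar>mu j\<bar>"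
        unfolding A_def B_def by linarith+
      then show ?case by (simp add: abs_mult mult_mono')
    qed
  qed
  have "expectation (H i j) = expectation (\<lambda>\<omega>. ((A \<omega>)\<^sup>2 + (B \<omega>)\<^sup>2 + d\<^sup>2 - 2 * (A \<omega> * B \<omega>) + 2 * d * A \<omega> - 2 * d * B \<omega>) / 2)"
    by (intro Bochner_Integration.integral_cong refl eq)
  also have "\<dots> = (expectation (\<lambda>\<omega>. (A \<omega>)\<^sup>2) + expectation (\<lambda>\<omega>. (B \<omega>)\<^sup>2) + d\<^sup>2 - 2 * expectation (\<lambda>\<omega>. A \<omega> * B \<omega>)
                   + 2 * d * expectation A - 2 * d * expectation B) / 2"
    using iA iB iAB by (simp add: prob_space)
  also have "expectation A = 0" unfolding A_def using mu_centered ij by simp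
  also have "expectation B = 0" unfolding B_def using mu_centered ij by simp
  also have "expectation (\<lambda>\<omega>. A \<omega> * B \<omega>) = 0" unfolding A_def B_def using E_cross[OF ij] .
  finally show ?thesis unfolding sv_def A_def B_def d_def by simp
qed

end

context pair_setting begin

lemma indep_pairs:
  assumes p: "p permutes {..<n}" and g[measurable]: "\<And>k. g k \<in> borel_measurable borel"
  shows "indep_vars (\<lambda>_. borel) (\<lambda>k \<omega>. g k (H (p (2*k)) (p (2*k+1)) \<omega>)) {..<n div 2}"
proof -
  define K where "K k = {p (2*k), p (2*k+1)}" for k
  have inS: "x < n \<Longrightarrow> p x < n" for x using permutes_in_image[OF p, of x] by auto
  have lt: "k < n div 2 \<Longrightarrow> 2*k+1 < n" for k by linarith
  have Ksub: "K k \<subseteq> {..<n}" if "k \<in> {..<n div 2}" for k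
    using that lt[of k] inS unfolding K_def by auto
  have injp: "inj p" using p by (rule permutes_inj)
  have disj: "disjoint_family_on K {..<n div 2}"
    unfolding disjoint_family_on_def K_def
  proof (intro ballI impI)
    fix k l assume "k \<in> {..<n div 2}" "l \<in> {..<n div 2}" "k \<noteq> l"
    then show "{p (2 * k), p (2 * k + 1)} \<inter> {p (2 * l), p (2 * l + 1)} = {}"
      using injp by (auto simp: inj_eq)
  qed
  have R: "indep_vars (\<lambda>k. PiM (K k) (\<lambda>_. borel)) (\<lambda>k \<omega>. restrict (\<lambda>i. Y i \<omega>) (K k)) {..<n div 2}"
    by (rule indep_vars_restrict[OF indep Ksub disj])
  define F where "F k f = g k ((f (p (2*k)) - f (p (2*k+1)))\<^sup>2 / 2)" for k and f :: "nat \<Rightarrow> real"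
  have Fm: "F k \<in> measurable (PiM (K k) (\<lambda>_. borel)) borel" for k
  proof -
    have "(\<lambda>f. f (p (2*k))) \<in> measurable (PiM (K k) (\<lambda>_. borel)) borel"
      by (rule measurable_component_singleton) (simp add: K_def)
    moreover have "(\<lambda>f. f (p (2*k+1))) \<in> measurable (PiM (K k) (\<lambda>_. borel)) borel"
      by (rule measurable_component_singleton) (simp add: K_def)
    ultimately show ?thesis unfolding F_def by measurable
  qed
  have C: "indep_vars (\<lambda>_. borel) (\<lambda>k \<omega>. F k (restrict (\<lambda>i. Y i \<omega>) (K k))) {..<n div 2}"
    by (rule indep_vars_compose2[OF R Fm])
  show ?thesis
    by (rule indep_vars_cong[THEN iffD1, OF refl _ refl C]) (auto simp: F_def K_def H_def fun_eq_iff)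
qed

end

context pair_setting begin

definition U where "U \<omega> = (\<Sum>i<n. \<Sum>j<n. if i = j then 0 else H i j \<omega>) / (real n * (real n - 1))"

abbreviation m where "m \<equiv> n div 2"

lemma m_pos: "0 < m" using n2 by auto

lemma integrable_exp_bnd:
  fixes c :: real
  assumes [measurable]: "f \<in> borel_measurable M" and fb: "AE x in M. 0 \<le> f x \<and> f x \<le> D"
  shows "integrable M (\<lambda>x. exp (c * f x))"
proof (rule integrable_AE_bounded[where C="exp (\<bar>c\<bar> * D)"])
  show "(\<lambda>x. exp (c * f x)) \<in> borel_measurable M" by measurable
  show "AE x in M. \<bar>exp (c * f x)\<bar> \<le> exp (\<bar>c\<bar> * D)"
    using fb
  proof (rule eventually_mono)
    fix x assume "0 \<le> f x \<and> f x \<le> D"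
    then have "c * f x \<le> \<bar>c\<bar> * D"
      by (metis abs_ge_self abs_mult abs_of_nonneg mult_mono' order.trans abs_ge_zero)
    then show "\<bar>exp (c * f x)\<bar> \<le> exp (\<bar>c\<bar> * D)" by simp
  qed
qed

lemma Yall: "AE \<omega> in M. \<forall>r\<in>{..<n}. a \<le> Y r \<omega> \<and> Y r \<omega> \<le> b"
proof (rule AE_finite_allI)
  fix r assume "r \<in> {..<n}"
  then show "AE \<omega> in M. a \<le> Y r \<omega> \<and> Y r \<omega> \<le> b" by (intro bnd) auto
qed simp

lemma Hall: "AE \<omega> in M. \<forall>i\<in>{..<n}. \<forall>j\<in>{..<n}. 0 \<le> H i j \<omega> \<and> H i j \<omega> \<le> (b - a)\<^sup>2 / 2"
  using Yall
proof (rule eventually_mono, intro ballI)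
  fix \<omega> i j assume Y: "\<forall>r\<in>{..<n}. a \<le> Y r \<omega> \<and> Y r \<omega> \<le> b" and ij: "i \<in> {..<n}" "j \<in> {..<n}"
  then have "a \<le> Y i \<omega> \<and> Y i \<omega> \<le> b" "a \<le> Y j \<omega> \<and> Y j \<omega> \<le> b" by auto
  then have "\<bar>Y i \<omega> - Y j \<omega>\<bar> \<le> \<bar>b - a\<bar>" by linarith
  then have "(Y i \<omega> - Y j \<omega>)\<^sup>2 \<le> (b - a)\<^sup>2" by (simp add: abs_le_square_iff)
  then show "0 \<le> H i j \<omega> \<and> H i j \<omega> \<le> (b - a)\<^sup>2 / 2" unfolding H_def by auto
qed

lemma Umeas[measurable]: "U \<in> borel_measurable M"
  unfolding U_def by measurable

lemma U_avg:
  "U \<omega> = (\<Sum>p\<in>{p. p permutes {..<n}}. (1 / fact n) * ((1 / real m) * (\<Sum>k<m. H (p (2*k)) (p (2*k+1)) \<omega>)))"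
proof -
  have sym: "H i j \<omega> = H j i \<omega>" for i j unfolding H_def by (simp add: power2_commute)
  have pa: "(\<Sum>p\<in>{p. p permutes {..<n}}. \<Sum>k<m. H (p (2*k)) (p (2*k+1)) \<omega>)
       = real m * (fact n / (real n * (real n - 1))) * (\<Sum>i<n. \<Sum>j<n. if i = j then 0 else H i j \<omega>)"
    by (rule perm_avg[where F="\<lambda>i j. H i j \<omega>", OF sym n2])
  have "(\<Sum>p\<in>{p. p permutes {..<n}}. (1 / fact n) * ((1 / real m) * (\<Sum>k<m. H (p (2*k)) (p (2*k+1)) \<omega>)))
      = (1 / fact n) * (1 / real m) * (\<Sum>p\<in>{p. p permutes {..<n}}. \<Sum>k<m. H (p (2*k)) (p (2*k+1)) \<omega>)"
    by (simp add: sum_distrib_left mult.assoc)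
  also have "\<dots> = U \<omega>" unfolding pa U_def using m_pos by (simp add: field_simps)
  finally show ?thesis by simp
qed

lemma mgf_U:
  assumes B: "\<And>p. p permutes {..<n} \<Longrightarrow>
     (\<Prod>k<m. expectation (\<lambda>\<omega>. exp ((c / m) * H (p (2*k)) (p (2*k+1)) \<omega>))) \<le> B"
  shows "expectation (\<lambda>\<omega>. exp (c * U \<omega>)) \<le> B"
proof -
  define P where "P = {p. p permutes {..<n}}"
  define W where "W p \<omega> = (c / m) * (\<Sum>k<m. H (p (2*k)) (p (2*k+1)) \<omega>)" for p \<omega>
  have finP: "finite P" unfolding P_def by (intro finite_permutations) auto
  have cardP: "card P = fact n" unfolding P_def by (intro card_permutations) auto
  have Pne: "P \<noteq> {}" using finP cardP by (metis card.empty fact_nonzero of_nat_0 of_nat_eq_0_iff)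
  have PinS: "p \<in> P \<Longrightarrow> x < n \<Longrightarrow> p x < n" for p x using permutes_in_image[of p "{..<n}" x] unfolding P_def by auto
  have lt: "k < m \<Longrightarrow> 2*k+1 < n" for k by linarith
  have Wm[measurable]: "p \<in> P \<Longrightarrow> W p \<in> borel_measurable M" for p
  proof -
    assume p: "p \<in> P"
    have "(\<lambda>\<omega>. H (p (2*k)) (p (2*k+1)) \<omega>) \<in> borel_measurable M" if "k < m" for k
      using PinS[OF p, of "2*k"] PinS[OF p, of "2*k+1"] lt[OF that] by (intro Hmeas) auto
    then show ?thesis unfolding W_def by (intro borel_measurable_times borel_measurable_const borel_measurable_sum) auto
  qed
  have Wbnd: "p \<in> P \<Longrightarrow> AE \<omega> in M. 0 \<le> (\<Sum>k<m. H (p (2*k)) (p (2*k+1)) \<omega>) \<and> (\<Sum>k<m. H (p (2*k)) (p (2*k+1)) \<omega>) \<le> real m * ((b - a)\<^sup>2 / 2)" for p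
    using Hall
  proof (rule eventually_mono)
    fix \<omega> assume p: "p \<in> P" and h: "\<forall>i\<in>{..<n}. \<forall>j\<in>{..<n}. 0 \<le> H i j \<omega> \<and> H i j \<omega> \<le> (b - a)\<^sup>2 / 2"
    have hk: "0 \<le> H (p (2*k)) (p (2*k+1)) \<omega> \<and> H (p (2*k)) (p (2*k+1)) \<omega> \<le> (b - a)\<^sup>2 / 2" if "k < m" for k
      using h PinS[OF p, of "2*k"] PinS[OF p, of "2*k+1"] lt[OF that] by auto
    have "(\<Sum>k<m. H (p (2*k)) (p (2*k+1)) \<omega>) \<le> (\<Sum>k<m. (b - a)\<^sup>2 / 2)" using hk by (intro sum_mono) auto
    then show "0 \<le> (\<Sum>k<m. H (p (2*k)) (p (2*k+1)) \<omega>) \<and> (\<Sum>k<m. H (p (2*k)) (p (2*k+1)) \<omega>) \<le> real m * ((b - a)\<^sup>2 / 2)"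
      using hk by (auto intro: sum_nonneg)
  qed
  have intW: "p \<in> P \<Longrightarrow> integrable M (\<lambda>\<omega>. exp (W p \<omega>))" for p
  proof -
    assume p: "p \<in> P"
    have m: "(\<lambda>\<omega>. \<Sum>k<m. H (p (2*k)) (p (2*k+1)) \<omega>) \<in> borel_measurable M"
    proof -
      have "(\<lambda>\<omega>. H (p (2*k)) (p (2*k+1)) \<omega>) \<in> borel_measurable M" if "k < m" for k
        using PinS[OF p, of "2*k"] PinS[OF p, of "2*k+1"] lt[OF that] by (intro Hmeas) auto
      then show ?thesis by (intro borel_measurable_sum) auto
    qed
    show ?thesis unfolding W_def mult.assoc using integrable_exp_bnd[OF m Wbnd[OF p], of "c / m"] by simp
  qed
  have Uavg: "c * U \<omega> = (\<Sum>p\<in>P. (1 / fact n) *\<^sub>R W p \<omega>)" for \<omega>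
    unfolding U_avg P_def W_def by (simp add: sum_distrib_left field_simps)
  have jensen: "exp (c * U \<omega>) \<le> (\<Sum>p\<in>P. (1 / fact n) * exp (W p \<omega>))" for \<omega>
    unfolding Uavg
    by (rule convex_on_sum[OF finP Pne exp_convex]) (use cardP in auto)
  have intU: "integrable M (\<lambda>\<omega>. exp (c * U \<omega>))"
  proof -
    have "AE \<omega> in M. 0 \<le> U \<omega> \<and> U \<omega> \<le> (real n * real n * ((b - a)\<^sup>2 / 2)) / (real n * (real n - 1))"
      using Hall
    proof (rule eventually_mono)
      fix \<omega> assume h: "\<forall>i\<in>{..<n}. \<forall>j\<in>{..<n}. 0 \<le> H i j \<omega> \<and> H i j \<omega> \<le> (b - a)\<^sup>2 / 2"
      have den: "0 < real n * (real n - 1)" using n2 by auto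
      have "(\<Sum>i<n. \<Sum>j<n. if i = j then 0 else H i j \<omega>) \<le> (\<Sum>i<n. \<Sum>j<n. (b - a)\<^sup>2 / 2)"
        using h by (intro sum_mono) auto
      also have "\<dots> = real n * real n * ((b - a)\<^sup>2 / 2)" by simp
      finally have s1: "(\<Sum>i<n. \<Sum>j<n. if i = j then 0 else H i j \<omega>) \<le> real n * real n * ((b - a)\<^sup>2 / 2)" .
      have s0: "0 \<le> (\<Sum>i<n. \<Sum>j<n. if i = j then 0 else H i j \<omega>)"
        using h by (intro sum_nonneg) auto
      have "U \<omega> \<le> (real n * real n * ((b - a)\<^sup>2 / 2)) / (real n * (real n - 1))"
        unfolding U_def by (rule divide_right_mono[OF s1]) (use den in simp)
      moreover have "0 \<le> U \<omega>" unfolding U_def using s0 den by simp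
      ultimately show "0 \<le> U \<omega> \<and> U \<omega> \<le> (real n * real n * ((b - a)\<^sup>2 / 2)) / (real n * (real n - 1))"
        by simp
    qed
    then show ?thesis by (rule integrable_exp_bnd[OF Umeas])
  qed
  have "expectation (\<lambda>\<omega>. exp (c * U \<omega>)) \<le> expectation (\<lambda>\<omega>. \<Sum>p\<in>P. (1 / fact n) * exp (W p \<omega>))"
    by (rule integral_mono[OF intU _ jensen]) (use intW in auto)
  also have "\<dots> = (\<Sum>p\<in>P. (1 / fact n) * expectation (\<lambda>\<omega>. exp (W p \<omega>)))"
    using intW by (simp add: integral_sum)
  also have "\<dots> \<le> (\<Sum>p\<in>P. (1 / fact n) * B)"
  proof (intro sum_mono mult_left_mono)
    fix p assume p: "p \<in> P"
    have "expectation (\<lambda>\<omega>. exp (W p \<omega>)) = expectation (\<lambda>\<omega>. \<Prod>k<m. exp ((c / m) * H (p (2*k)) (p (2*k+1)) \<omega>))"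
      unfolding W_def by (simp add: sum_distrib_left exp_sum)
    also have "\<dots> = (\<Prod>k<m. expectation (\<lambda>\<omega>. exp ((c / m) * H (p (2*k)) (p (2*k+1)) \<omega>)))"
    proof (rule indep_vars_lebesgue_integral)
      show "indep_vars (\<lambda>_. borel) (\<lambda>k \<omega>. exp ((c / m) * H (p (2*k)) (p (2*k+1)) \<omega>)) {..<m}"
        using p unfolding P_def by (intro indep_pairs[where g="\<lambda>k x. exp ((c / m) * x)"]) auto
      fix k assume k: "k \<in> {..<m}"
      have hm: "H (p (2*k)) (p (2*k+1)) \<in> borel_measurable M"
        using PinS[OF p, of "2*k"] PinS[OF p, of "2*k+1"] lt k by (intro Hmeas) auto
      show "integrable M (\<lambda>\<omega>. exp ((c / m) * H (p (2*k)) (p (2*k+1)) \<omega>))"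
      proof (rule integrable_exp_bnd[OF hm, where D="(b - a)\<^sup>2 / 2"])
        show "AE x in M. 0 \<le> H (p (2*k)) (p (2*k+1)) x \<and> H (p (2*k)) (p (2*k+1)) x \<le> (b - a)\<^sup>2 / 2"
          using PinS[OF p, of "2*k"] PinS[OF p, of "2*k+1"] lt k by (intro H_bnd) auto
      qed
    qed simp
    also have "\<dots> \<le> B" using B p unfolding P_def by auto
    finally show "expectation (\<lambda>\<omega>. exp (W p \<omega>)) \<le> B" .
  qed simp
  also have "\<dots> = B" using cardP by simp
  finally show ?thesis .
qed

end

context pair_setting begin

lemma pair_in: "p permutes {..<n} \<Longrightarrow> k < m \<Longrightarrow> p (2*k) < n \<and> p (2*k+1) < n \<and> p (2*k) \<noteq> p (2*k+1)"
proof -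
  assume p: "p permutes {..<n}" and k: "k < m"
  have lt: "2*k+1 < n" using k by linarith
  have "p (2*k) \<noteq> p (2*k+1)" using permutes_inj[OF p] by (auto simp: inj_eq)
  then show ?thesis using permutes_in_image[OF p, of "2*k"] permutes_in_image[OF p, of "2*k+1"] lt by auto
qed

lemma lower_tail:
  assumes l: "0 \<le> l" "l * (b - a)\<^sup>2 \<le> 4 * real m"
    and w: "\<And>p. p permutes {..<n} \<Longrightarrow> real m * w \<le> (\<Sum>k<m. (sv (p (2*k)) + sv (p (2*k+1))) / 2)"
  shows "prob {\<omega>\<in>space M. U \<omega> \<le> T} \<le> exp (l * T - (l - l\<^sup>2 * (b - a)\<^sup>2 / (4 * real m)) * w)"
proof -
  define K where "K = (b - a)\<^sup>2 / 2"
  define s where "s = l / real m"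
  have mp: "0 < real m" using m_pos by simp
  have s0: "0 \<le> s" unfolding s_def using l mp by auto
  have sK: "s * K \<le> 2" unfolding s_def K_def using l mp by (simp add: field_simps)
  have coef: "0 \<le> s - s\<^sup>2 * K / 2"
  proof -
    have "s\<^sup>2 * K / 2 = s * (s * K) / 2" by (simp add: power2_eq_square)
    also have "\<dots> \<le> s * 2 / 2" using sK s0 by (intro divide_right_mono mult_left_mono) auto
    finally show ?thesis by simp
  qed
  have mgf: "expectation (\<lambda>\<omega>. exp ((- l) * U \<omega>)) \<le> exp (- (l - l\<^sup>2 * (b - a)\<^sup>2 / (4 * real m)) * w)"
  proof (rule mgf_U)
    fix p assume p: "p permutes {..<n}"
    have "(\<Prod>k<m. expectation (\<lambda>\<omega>. exp (((- l) / m) * H (p (2*k)) (p (2*k+1)) \<omega>)))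
        \<le> (\<Prod>k<m. exp (- (s - s\<^sup>2 * K / 2) * ((sv (p (2*k)) + sv (p (2*k+1))) / 2)))"
    proof (rule prod_mono, intro conjI)
      fix k assume k: "k \<in> {..<m}"
      have pi: "p (2*k) < n \<and> p (2*k+1) < n \<and> p (2*k) \<noteq> p (2*k+1)" using pair_in[OF p, of k] k by auto
      show "0 \<le> expectation (\<lambda>\<omega>. exp (((- l) / m) * H (p (2*k)) (p (2*k+1)) \<omega>))"
        by (rule integral_nonneg_AE) auto
      have "expectation (\<lambda>\<omega>. exp (((- l) / m) * H (p (2*k)) (p (2*k+1)) \<omega>))
          = expectation (\<lambda>\<omega>. exp (- s * H (p (2*k)) (p (2*k+1)) \<omega>))" unfolding s_def by simp
      also have "\<dots> \<le> exp (- (s - s\<^sup>2 * K / 2) * expectation (H (p (2*k)) (p (2*k+1))))"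
      proof (rule mgf_lower[OF _ _ s0])
        show "H (p (2*k)) (p (2*k+1)) \<in> borel_measurable M" using pi by (intro Hmeas) auto
        show "AE \<omega> in M. 0 \<le> H (p (2*k)) (p (2*k+1)) \<omega> \<and> H (p (2*k)) (p (2*k+1)) \<omega> \<le> K"
          unfolding K_def using pi by (intro H_bnd) auto
      qed
      also have "\<dots> \<le> exp (- (s - s\<^sup>2 * K / 2) * ((sv (p (2*k)) + sv (p (2*k+1))) / 2))"
      proof -
        have "(sv (p (2*k)) + sv (p (2*k+1))) / 2 \<le> expectation (H (p (2*k)) (p (2*k+1)))"
          using pi by (simp add: EH divide_right_mono)
        then have "(s - s\<^sup>2 * K / 2) * ((sv (p (2*k)) + sv (p (2*k+1))) / 2) \<le> (s - s\<^sup>2 * K / 2) * expectation (H (p (2*k)) (p (2*k+1)))"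
          using coef by (rule mult_left_mono)
        then show ?thesis by (simp only: exp_le_cancel_iff mult_minus_left neg_le_iff_le)
      qed
      finally show "expectation (\<lambda>\<omega>. exp (((- l) / m) * H (p (2*k)) (p (2*k+1)) \<omega>))
          \<le> exp (- (s - s\<^sup>2 * K / 2) * ((sv (p (2*k)) + sv (p (2*k+1))) / 2))" .
    qed
    also have "\<dots> = exp (- (s - s\<^sup>2 * K / 2) * (\<Sum>k<m. (sv (p (2*k)) + sv (p (2*k+1))) / 2))"
      by (simp add: exp_sum sum_distrib_left)
    also have "\<dots> \<le> exp (- (s - s\<^sup>2 * K / 2) * (real m * w))"
    proof -
      have "(s - s\<^sup>2 * K / 2) * (real m * w) \<le> (s - s\<^sup>2 * K / 2) * (\<Sum>k<m. (sv (p (2*k)) + sv (p (2*k+1))) / 2)"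
        using w[OF p] coef by (rule mult_left_mono)
      then show ?thesis by (simp only: exp_le_cancel_iff mult_minus_left neg_le_iff_le)
    qed
    also have "exp (- (s - s\<^sup>2 * K / 2) * (real m * w)) = exp (- (l - l\<^sup>2 * (b - a)\<^sup>2 / (4 * real m)) * w)"
      unfolding s_def K_def using mp by (simp add: field_simps power2_eq_square)
    finally show "(\<Prod>k<m. expectation (\<lambda>\<omega>. exp (((- l) / m) * H (p (2*k)) (p (2*k+1)) \<omega>)))
        \<le> exp (- (l - l\<^sup>2 * (b - a)\<^sup>2 / (4 * real m)) * w)" by simp
  qed
  have intE: "integrable M (\<lambda>\<omega>. exp ((- l) * U \<omega>))"
  proof -
    have "AE \<omega> in M. 0 \<le> U \<omega> \<and> U \<omega> \<le> (real n * real n * ((b - a)\<^sup>2 / 2)) / (real n * (real n - 1))"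
      using Hall
    proof (rule eventually_mono)
      fix \<omega> assume h: "\<forall>i\<in>{..<n}. \<forall>j\<in>{..<n}. 0 \<le> H i j \<omega> \<and> H i j \<omega> \<le> (b - a)\<^sup>2 / 2"
      have den: "0 < real n * (real n - 1)" using n2 by auto
      have "(\<Sum>i<n. \<Sum>j<n. if i = j then 0 else H i j \<omega>) \<le> (\<Sum>i<n. \<Sum>j<n. (b - a)\<^sup>2 / 2)"
        using h by (intro sum_mono) auto
      also have "\<dots> = real n * real n * ((b - a)\<^sup>2 / 2)" by simp
      finally have s1: "(\<Sum>i<n. \<Sum>j<n. if i = j then 0 else H i j \<omega>) \<le> real n * real n * ((b - a)\<^sup>2 / 2)" .
      have s0: "0 \<le> (\<Sum>i<n. \<Sum>j<n. if i = j then 0 else H i j \<omega>)"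
        using h by (intro sum_nonneg) auto
      have "U \<omega> \<le> (real n * real n * ((b - a)\<^sup>2 / 2)) / (real n * (real n - 1))"
        unfolding U_def by (rule divide_right_mono[OF s1]) (use den in simp)
      moreover have "0 \<le> U \<omega>" unfolding U_def using s0 den by simp
      ultimately show "0 \<le> U \<omega> \<and> U \<omega> \<le> (real n * real n * ((b - a)\<^sup>2 / 2)) / (real n * (real n - 1))"
        by simp
    qed
    then show ?thesis by (rule integrable_exp_bnd[OF Umeas])
  qed
  have "prob {\<omega>\<in>space M. U \<omega> \<le> T} \<le> prob {\<omega>\<in>space M. exp ((- l) * U \<omega>) \<ge> exp ((- l) * T)}"
    using l by (intro finite_measure_mono) (auto intro: mult_left_mono)
  also have "\<dots> \<le> expectation (\<lambda>\<omega>. exp ((- l) * U \<omega>)) / exp ((- l) * T)"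
    by (rule integral_Markov_inequality_measure[OF intE]) auto
  also have "\<dots> \<le> exp (- (l - l\<^sup>2 * (b - a)\<^sup>2 / (4 * real m)) * w) / exp ((- l) * T)"
    by (rule divide_right_mono[OF mgf]) simp
  also have "\<dots> = exp (l * T - (l - l\<^sup>2 * (b - a)\<^sup>2 / (4 * real m)) * w)"
    by (simp add: exp_diff[symmetric] algebra_simps)
  finally show ?thesis .
qed

end

context pair_setting begin

lemma U_int: "integrable M (\<lambda>\<omega>. exp (c * U \<omega>))"
proof -
  have "AE \<omega> in M. 0 \<le> U \<omega> \<and> U \<omega> \<le> (real n * real n * ((b - a)\<^sup>2 / 2)) / (real n * (real n - 1))"
    using Hall
  proof (rule eventually_mono)
    fix \<omega> assume h: "\<forall>i\<in>{..<n}. \<forall>j\<in>{..<n}. 0 \<le> H i j \<omega> \<and> H i j \<omega> \<le> (b - a)\<^sup>2 / 2"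
    have den: "0 < real n * (real n - 1)" using n2 by auto
    have "(\<Sum>i<n. \<Sum>j<n. if i = j then 0 else H i j \<omega>) \<le> (\<Sum>i<n. \<Sum>j<n. (b - a)\<^sup>2 / 2)"
      using h by (intro sum_mono) auto
    also have "\<dots> = real n * real n * ((b - a)\<^sup>2 / 2)" by simp
    finally have s1: "(\<Sum>i<n. \<Sum>j<n. if i = j then 0 else H i j \<omega>) \<le> real n * real n * ((b - a)\<^sup>2 / 2)" .
    have s0: "0 \<le> (\<Sum>i<n. \<Sum>j<n. if i = j then 0 else H i j \<omega>)"
      using h by (intro sum_nonneg) auto
    have "U \<omega> \<le> (real n * real n * ((b - a)\<^sup>2 / 2)) / (real n * (real n - 1))"
      unfolding U_def by (rule divide_right_mono[OF s1]) (use den in simp)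
    moreover have "0 \<le> U \<omega>" unfolding U_def using s0 den by simp
    ultimately show "0 \<le> U \<omega> \<and> U \<omega> \<le> (real n * real n * ((b - a)\<^sup>2 / 2)) / (real n * (real n - 1))"
      by simp
  qed
  then show ?thesis by (rule integrable_exp_bnd[OF Umeas])
qed

lemma upper_tail:
  assumes l: "0 \<le> l" "l * (b - a)\<^sup>2 \<le> 2 * real m"
    and v: "\<And>p. p permutes {..<n} \<Longrightarrow>
       (\<Sum>k<m. (sv (p (2*k)) + sv (p (2*k+1)) + (mu (p (2*k)) - mu (p (2*k+1)))\<^sup>2) / 2) \<le> real m * v"
  shows "prob {\<omega>\<in>space M. T \<le> U \<omega>} \<le> exp (- l * T + (l + l\<^sup>2 * (b - a)\<^sup>2 / (2 * real m)) * v)"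
proof -
  define K where "K = (b - a)\<^sup>2 / 2"
  define s where "s = l / real m"
  have mp: "0 < real m" using m_pos by simp
  have s0: "0 \<le> s" unfolding s_def using l mp by auto
  have sK: "s * K \<le> 1" unfolding s_def K_def using l mp by (simp add: field_simps)
  have K0: "0 \<le> K" unfolding K_def by simp
  have coef: "0 \<le> s + s\<^sup>2 * K" using s0 K0 by simp
  have mgf: "expectation (\<lambda>\<omega>. exp (l * U \<omega>)) \<le> exp ((l + l\<^sup>2 * (b - a)\<^sup>2 / (2 * real m)) * v)"
  proof (rule mgf_U)
    fix p assume p: "p permutes {..<n}"
    have "(\<Prod>k<m. expectation (\<lambda>\<omega>. exp ((l / m) * H (p (2*k)) (p (2*k+1)) \<omega>)))
        \<le> (\<Prod>k<m. exp ((s + s\<^sup>2 * K) * ((sv (p (2*k)) + sv (p (2*k+1)) + (mu (p (2*k)) - mu (p (2*k+1)))\<^sup>2) / 2)))"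
    proof (rule prod_mono, intro conjI)
      fix k assume k: "k \<in> {..<m}"
      have pi: "p (2*k) < n \<and> p (2*k+1) < n \<and> p (2*k) \<noteq> p (2*k+1)" using pair_in[OF p, of k] k by auto
      show "0 \<le> expectation (\<lambda>\<omega>. exp ((l / m) * H (p (2*k)) (p (2*k+1)) \<omega>))"
        by (rule integral_nonneg_AE) auto
      have "expectation (\<lambda>\<omega>. exp ((l / m) * H (p (2*k)) (p (2*k+1)) \<omega>))
          = expectation (\<lambda>\<omega>. exp (s * H (p (2*k)) (p (2*k+1)) \<omega>))" unfolding s_def by simp
      also have "\<dots> \<le> exp ((s + s\<^sup>2 * K) * expectation (H (p (2*k)) (p (2*k+1))))"
      proof (rule mgf_upper[OF _ _ s0 sK])
        show "H (p (2*k)) (p (2*k+1)) \<in> borel_measurable M" using pi by (intro Hmeas) auto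
        show "AE \<omega> in M. 0 \<le> H (p (2*k)) (p (2*k+1)) \<omega> \<and> H (p (2*k)) (p (2*k+1)) \<omega> \<le> K"
          unfolding K_def using pi by (intro H_bnd) auto
      qed
      also have "expectation (H (p (2*k)) (p (2*k+1))) = (sv (p (2*k)) + sv (p (2*k+1)) + (mu (p (2*k)) - mu (p (2*k+1)))\<^sup>2) / 2"
        using pi by (simp add: EH)
      finally show "expectation (\<lambda>\<omega>. exp ((l / m) * H (p (2*k)) (p (2*k+1)) \<omega>))
          \<le> exp ((s + s\<^sup>2 * K) * ((sv (p (2*k)) + sv (p (2*k+1)) + (mu (p (2*k)) - mu (p (2*k+1)))\<^sup>2) / 2))" .
    qed
    also have "\<dots> = exp ((s + s\<^sup>2 * K) * (\<Sum>k<m. (sv (p (2*k)) + sv (p (2*k+1)) + (mu (p (2*k)) - mu (p (2*k+1)))\<^sup>2) / 2))"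
      by (simp add: exp_sum sum_distrib_left)
    also have "\<dots> \<le> exp ((s + s\<^sup>2 * K) * (real m * v))"
      using mult_left_mono[OF v[OF p] coef] by simp
    also have "exp ((s + s\<^sup>2 * K) * (real m * v)) = exp ((l + l\<^sup>2 * (b - a)\<^sup>2 / (2 * real m)) * v)"
      unfolding s_def K_def using mp by (simp add: field_simps power2_eq_square)
    finally show "(\<Prod>k<m. expectation (\<lambda>\<omega>. exp ((l / m) * H (p (2*k)) (p (2*k+1)) \<omega>)))
        \<le> exp ((l + l\<^sup>2 * (b - a)\<^sup>2 / (2 * real m)) * v)" .
  qed
  have "prob {\<omega>\<in>space M. T \<le> U \<omega>} \<le> prob {\<omega>\<in>space M. exp (l * U \<omega>) \<ge> exp (l * T)}"
    using l by (intro finite_measure_mono) (auto intro: mult_left_mono)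
  also have "\<dots> \<le> expectation (\<lambda>\<omega>. exp (l * U \<omega>)) / exp (l * T)"
    by (rule integral_Markov_inequality_measure[OF U_int]) auto
  also have "\<dots> \<le> exp ((l + l\<^sup>2 * (b - a)\<^sup>2 / (2 * real m)) * v) / exp (l * T)"
    by (rule divide_right_mono[OF mgf]) simp
  also have "\<dots> = exp (- l * T + (l + l\<^sup>2 * (b - a)\<^sup>2 / (2 * real m)) * v)"
    by (simp add: exp_diff[symmetric] algebra_simps)
  finally show ?thesis .
qed

end

lemma ln2_ge_half: "1/2 \<le> ln (2::real)"
proof -
  have "exp (1/2::real) \<le> 1 + 1/2 + (1/2)\<^sup>2" by (rule exp_bound) auto
  also have "\<dots> \<le> 2" by (simp add: power2_eq_square)
  finally have "exp (1/2::real) \<le> 2" .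
  then show ?thesis by (metis exp_gt_zero exp_ln ln_exp ln_le_cancel_iff zero_less_numeral)
qed

lemma alg_F1:
  fixes n m M L A :: real
  assumes n: "2 \<le> n" and m: "n - 1 \<le> 2 * m" and M: "0 < M" and L: "0 < L"
    and A: "2 * M * L / (n - 1) \<le> A"
  shows "L * M\<^sup>2 \<le> m * (A / sqrt (2 * L / n))\<^sup>2"
proof -
  have n1: "0 < n - 1" using n by simp
  have c: "(sqrt (2 * L / n))\<^sup>2 = 2 * L / n" using n L by simp
  have A0: "0 \<le> 2 * M * L / (n - 1)" using n1 M L by simp
  have "(2 * M * L / (n - 1))\<^sup>2 \<le> A\<^sup>2" using A A0 by (intro power_mono) auto
  then have "(2 * M * L / (n - 1))\<^sup>2 / (2 * L / n) \<le> A\<^sup>2 / (2 * L / n)"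
    by (rule divide_right_mono) (use L n in simp)
  also have "A\<^sup>2 / (2 * L / n) = (A / sqrt (2 * L / n))\<^sup>2" by (simp add: power_divide c)
  finally have "(A / sqrt (2 * L / n))\<^sup>2 \<ge> (2 * M * L / (n - 1))\<^sup>2 / (2 * L / n)" .
  also have "(2 * M * L / (n - 1))\<^sup>2 / (2 * L / n) = 2 * n * M\<^sup>2 * L / (n - 1)\<^sup>2"
  proof -
    have n1': "n - 1 \<noteq> 0" "n \<noteq> 0" "L \<noteq> 0" using n1 n L by auto
    define d where "d = n - 1"
    have "d \<noteq> 0" using n1' d_def by simp
    then have "(2 * M * L / d)\<^sup>2 / (2 * L / n) = 2 * n * M\<^sup>2 * L / d\<^sup>2"
      using n1' by (simp add: power_divide power_mult_distrib field_simps) (simp add: power2_eq_square)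
    then show ?thesis unfolding d_def .
  qed
  finally have s: "2 * n * M\<^sup>2 * L / (n - 1)\<^sup>2 \<le> (A / sqrt (2 * L / n))\<^sup>2" .
  have "m * (2 * n * M\<^sup>2 * L / (n - 1)\<^sup>2) \<ge> ((n - 1) / 2) * (2 * n * M\<^sup>2 * L / (n - 1)\<^sup>2)"
    using m n1 M L n by (intro mult_right_mono) auto
  also have "((n - 1) / 2) * (2 * n * M\<^sup>2 * L / (n - 1)\<^sup>2) = n * M\<^sup>2 * L / (n - 1)"
  proof -
    define d where "d = n - 1"
    have "d \<noteq> 0" using n1 d_def by simp
    then have "(d / 2) * (2 * n * M\<^sup>2 * L / d\<^sup>2) = n * M\<^sup>2 * L / d"
      by (simp add: field_simps power2_eq_square)
    then show ?thesis unfolding d_def .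
  qed
  also have "n * M\<^sup>2 * L / (n - 1) \<ge> L * M\<^sup>2"
    using n1 M L by (simp add: field_simps)
  finally have "L * M\<^sup>2 \<le> m * (2 * n * M\<^sup>2 * L / (n - 1)\<^sup>2)" by simp
  also have "\<dots> \<le> m * (A / sqrt (2 * L / n))\<^sup>2"
    using s m n1 by (intro mult_left_mono) auto
  finally show ?thesis .
qed

lemma alg_lower:
  fixes m M \<sigma> s1 L L' :: real
  assumes m: "0 < m" and M: "0 < M" and ss: "s1 \<le> \<sigma>" and s1: "0 < s1"
    and F1: "L * M\<^sup>2 \<le> m * s1\<^sup>2" and LL: "L' + 1/4 \<le> L" and L': "0 \<le> L'"
  shows "\<sigma>\<^sup>2 * M\<^sup>2 * L' \<le> m * (\<sigma> * s1 - M\<^sup>2 / (8 * m))\<^sup>2"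
    and "0 < \<sigma> * s1 - M\<^sup>2 / (8 * m)"
proof -
  have sig: "0 < \<sigma>" using ss s1 by simp
  have e1: "m * (\<sigma> * s1 - M\<^sup>2 / (8 * m))\<^sup>2 = \<sigma>\<^sup>2 * (m * s1\<^sup>2) - \<sigma> * s1 * M\<^sup>2 / 4 + M\<^sup>2 * M\<^sup>2 / (64 * m)"
    using m by (simp add: power2_eq_square field_simps)
  have "\<sigma>\<^sup>2 * (m * s1\<^sup>2) \<ge> \<sigma>\<^sup>2 * (L * M\<^sup>2)" using F1 by (intro mult_left_mono) auto
  moreover have "\<sigma>\<^sup>2 * (L * M\<^sup>2) \<ge> \<sigma>\<^sup>2 * ((L' + 1/4) * M\<^sup>2)" using LL by (intro mult_left_mono mult_right_mono) auto
  moreover have "\<sigma> * s1 * M\<^sup>2 \<le> \<sigma> * \<sigma> * M\<^sup>2" using ss sig by (intro mult_right_mono mult_left_mono) auto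
  moreover have "0 \<le> M\<^sup>2 * M\<^sup>2 / (64 * m)" using m by simp
  ultimately show "\<sigma>\<^sup>2 * M\<^sup>2 * L' \<le> m * (\<sigma> * s1 - M\<^sup>2 / (8 * m))\<^sup>2"
    unfolding e1 by (simp add: power2_eq_square algebra_simps)
  have "s1 * s1 \<le> \<sigma> * s1" using ss s1 by (intro mult_right_mono) auto
  moreover have "L * M\<^sup>2 / m \<le> s1\<^sup>2" using F1 m by (simp add: field_simps)
  moreover have "M\<^sup>2 / (8 * m) < L * M\<^sup>2 / m"
  proof -
    have "1/8 < L" using LL L' by simp
    then have "M\<^sup>2 * (1/8) < M\<^sup>2 * L" using M by (intro mult_strict_left_mono) auto
    then show ?thesis using m by (simp add: field_simps)
  qed
  ultimately show "0 < \<sigma> * s1 - M\<^sup>2 / (8 * m)" by (simp add: power2_eq_square)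
qed

lemma alg_lower_exp:
  fixes m M \<sigma> w T G L' l :: real
  assumes m: "0 < m" and M: "0 < M" and sig: "0 < \<sigma>" and wT: "G \<le> w - T" and G: "0 < G"
    and ws: "w \<le> \<sigma>\<^sup>2" and T: "0 \<le> T" and F: "\<sigma>\<^sup>2 * M\<^sup>2 * L' \<le> m * G\<^sup>2"
    and l: "l = 2 * m * (w - T) / (M\<^sup>2 * \<sigma>\<^sup>2)"
  shows "l * T - (l - l\<^sup>2 * M\<^sup>2 / (4 * m)) * w \<le> - L'" and "0 \<le> l" and "l * M\<^sup>2 \<le> 4 * m"
proof -
  have l0: "0 \<le> l" unfolding l using wT G m M sig by simp
  show "0 \<le> l" by (rule l0)
  have D: "0 < M\<^sup>2 * \<sigma>\<^sup>2" using M sig by simp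
  have M2: "0 < M\<^sup>2" using M by simp
  have "l * M\<^sup>2 = 2 * m * (w - T) / \<sigma>\<^sup>2" unfolding l using M2 sig by (simp add: field_simps)
  also have "\<dots> \<le> 2 * m * (2 * \<sigma>\<^sup>2) / \<sigma>\<^sup>2"
  proof -
    have "w - T \<le> 2 * \<sigma>\<^sup>2" using ws T zero_le_power2[of \<sigma>] by linarith
    then show ?thesis using m by (intro divide_right_mono mult_left_mono) auto
  qed
  also have "\<dots> = 4 * m" using sig by simp
  finally show "l * M\<^sup>2 \<le> 4 * m" .
  have "l * T - (l - l\<^sup>2 * M\<^sup>2 / (4 * m)) * w = - l * (w - T) + l\<^sup>2 * M\<^sup>2 / (4 * m) * w"
    by (simp add: algebra_simps)
  also have "\<dots> \<le> - l * (w - T) + l\<^sup>2 * M\<^sup>2 / (4 * m) * \<sigma>\<^sup>2"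
    using ws m by (intro add_left_mono mult_left_mono) auto
  also have "\<dots> = - m * (w - T)\<^sup>2 / (M\<^sup>2 * \<sigma>\<^sup>2)"
    unfolding l using m M sig by (simp add: field_simps power2_eq_square)
  also have "\<dots> \<le> - L'"
  proof -
    have "G\<^sup>2 \<le> (w - T)\<^sup>2" using wT G by (intro power_mono) auto
    then have "\<sigma>\<^sup>2 * M\<^sup>2 * L' \<le> m * (w - T)\<^sup>2" using F m by (meson mult_left_mono order.trans less_imp_le)
    then have "L' \<le> m * (w - T)\<^sup>2 / (M\<^sup>2 * \<sigma>\<^sup>2)" using D by (simp add: field_simps)
    then show ?thesis by simp
  qed
  finally show "l * T - (l - l\<^sup>2 * M\<^sup>2 / (4 * m)) * w \<le> - L'" .
qed

lemma alg_upper: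
  fixes m M R s2 v L L' :: real
  assumes m: "0 < m" and M: "0 < M" and R: "0 \<le> R" and s2: "0 < s2"
    and F1: "L * M\<^sup>2 \<le> m * s2\<^sup>2" and LL: "L' + 1/2 \<le> L" and L': "0 \<le> L'"
    and v: "v \<le> R\<^sup>2 + M\<^sup>2 / (8 * m)"
  shows "\<exists>l. 0 \<le> l \<and> l * M\<^sup>2 \<le> 2 * m \<and> - l * (R + s2)\<^sup>2 + (l + l\<^sup>2 * M\<^sup>2 / (2 * m)) * v \<le> - L'"
proof -
  define e where "e = M\<^sup>2 / (8 * m)"
  define v1 where "v1 = R\<^sup>2 + e"
  define T where "T = (R + s2)\<^sup>2"
  define G where "G = T - v1"
  define P where "P = s2\<^sup>2 - e"
  have M2: "0 < M\<^sup>2" using M by simp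
  have e0: "0 < e" unfolding e_def using m M by simp
  have v1p: "0 < v1" unfolding v1_def using e0 zero_le_power2[of R] by linarith
  have GP: "G = 2 * R * s2 + P" unfolding G_def T_def v1_def P_def by (simp add: power2_eq_square algebra_simps)
  have mP: "M\<^sup>2 * (L' + 3/8) \<le> m * P"
  proof -
    have "m * P = m * s2\<^sup>2 - M\<^sup>2 / 8" unfolding P_def e_def using m by (simp add: field_simps)
    moreover have "M\<^sup>2 * (L' + 3/8) \<le> L * M\<^sup>2 - M\<^sup>2 / 8"
    proof -
      have "(L' + 1/2) * M\<^sup>2 \<le> L * M\<^sup>2" using LL M2 by (intro mult_right_mono) auto
      then show ?thesis by (simp add: algebra_simps)
    qed
    ultimately show ?thesis using F1 by linarith
  qed
  have P0: "0 \<le> P"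
  proof -
    have "0 \<le> M\<^sup>2 * (L' + 3/8)" using M2 L' by simp
    then have "0 \<le> m * P" using mP by linarith
    then show ?thesis using m by (simp add: zero_le_mult_iff)
  qed
  have RS: "0 \<le> 2 * R * s2" using R s2 by simp
  have G0: "P \<le> G" using GP RS by simp
  have mG: "M\<^sup>2 * (L' + 3/8) \<le> m * G" using mP G0 m by (meson mult_left_mono order.trans less_imp_le)
  have mono_v: "- l * T + (l + l\<^sup>2 * M\<^sup>2 / (2 * m)) * v \<le> - l * G + l\<^sup>2 * M\<^sup>2 / (2 * m) * v1" if l: "0 \<le> l" for l
  proof -
    have "0 \<le> l + l\<^sup>2 * M\<^sup>2 / (2 * m)" using l m by simp
    then have "(l + l\<^sup>2 * M\<^sup>2 / (2 * m)) * v \<le> (l + l\<^sup>2 * M\<^sup>2 / (2 * m)) * v1"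
      using v unfolding v1_def e_def by (intro mult_left_mono) auto
    then show ?thesis unfolding G_def by (simp add: algebra_simps)
  qed
  show ?thesis
  proof (cases "G \<le> 2 * v1")
    case True
    define l where "l = m * G / (M\<^sup>2 * v1)"
    have l0: "0 \<le> l" unfolding l_def using m G0 P0 v1p M2 by simp
    have lM: "l * M\<^sup>2 \<le> 2 * m"
    proof -
      have "l * M\<^sup>2 = m * G / v1" unfolding l_def using M2 v1p by (simp add: field_simps)
      also have "\<dots> \<le> m * (2 * v1) / v1" using True m v1p by (intro divide_right_mono mult_left_mono) auto
      also have "\<dots> = 2 * m" using v1p by simp
      finally show ?thesis .
    qed
    have ex: "- l * G + l\<^sup>2 * M\<^sup>2 / (2 * m) * v1 = - m * G\<^sup>2 / (2 * M\<^sup>2 * v1)"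
      unfolding l_def using m M2 v1p by (simp add: field_simps power2_eq_square)
    have key: "2 * L' * M\<^sup>2 * v1 \<le> m * G\<^sup>2"
    proof -
      have "G\<^sup>2 = (2 * R * s2)\<^sup>2 + 2 * (2 * R * s2) * P + P\<^sup>2" unfolding GP by (simp add: power2_eq_square algebra_simps)
      moreover have "0 \<le> 2 * (2 * R * s2) * P" using RS P0 by simp
      ultimately have G2: "4 * R\<^sup>2 * s2\<^sup>2 + P\<^sup>2 \<le> G\<^sup>2" by (simp add: power2_eq_square algebra_simps)
      have a1: "2 * L' * M\<^sup>2 * R\<^sup>2 \<le> 4 * R\<^sup>2 * (m * s2\<^sup>2)"
      proof -
        have "2 * L' * (M\<^sup>2 * R\<^sup>2) \<le> 4 * L * (M\<^sup>2 * R\<^sup>2)" using LL L' by (intro mult_right_mono) auto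
        then have "2 * L' * M\<^sup>2 * R\<^sup>2 \<le> 4 * R\<^sup>2 * (L * M\<^sup>2)" by (simp add: algebra_simps)
        also have "\<dots> \<le> 4 * R\<^sup>2 * (m * s2\<^sup>2)" using F1 by (intro mult_left_mono) auto
        finally show ?thesis .
      qed
      have a2: "2 * L' * M\<^sup>2 * e \<le> m * P\<^sup>2"
      proof -
        have "(M\<^sup>2 * (L' + 3/8))\<^sup>2 \<le> (m * P)\<^sup>2" using mP M2 L' by (intro power_mono) auto
        then have "M\<^sup>2 * M\<^sup>2 * (L' + 3/8)\<^sup>2 \<le> m * (m * P\<^sup>2)" by (simp add: power2_eq_square algebra_simps)
        moreover have "M\<^sup>2 * M\<^sup>2 * (L' / 4) \<le> M\<^sup>2 * M\<^sup>2 * (L' + 3/8)\<^sup>2"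
        proof -
          have "L' / 4 \<le> (L' + 3/8)\<^sup>2" using L' by (simp add: power2_eq_square algebra_simps)
          then show ?thesis using M2 by (intro mult_left_mono) auto
        qed
        ultimately have "M\<^sup>2 * M\<^sup>2 * (L' / 4) \<le> m * (m * P\<^sup>2)" by linarith
        then have "M\<^sup>2 * M\<^sup>2 * (L' / 4) / m \<le> m * P\<^sup>2" using m by (simp add: field_simps)
        moreover have "2 * L' * M\<^sup>2 * e = M\<^sup>2 * M\<^sup>2 * (L' / 4) / m" unfolding e_def using m by (simp add: field_simps)
        ultimately show ?thesis by simp
      qed
      have "2 * L' * M\<^sup>2 * v1 = 2 * L' * M\<^sup>2 * R\<^sup>2 + 2 * L' * M\<^sup>2 * e" unfolding v1_def by (simp add: algebra_simps)
      also have "\<dots> \<le> m * (4 * R\<^sup>2 * s2\<^sup>2 + P\<^sup>2)" using a1 a2 by (simp add: algebra_simps)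
      also have "\<dots> \<le> m * G\<^sup>2" using G2 m by (intro mult_left_mono) auto
      finally show ?thesis .
    qed
    have "- l * T + (l + l\<^sup>2 * M\<^sup>2 / (2 * m)) * v \<le> - m * G\<^sup>2 / (2 * M\<^sup>2 * v1)"
      using mono_v[OF l0] ex by simp
    also have "\<dots> \<le> - L'"
    proof -
      have "L' \<le> m * G\<^sup>2 / (2 * M\<^sup>2 * v1)" using key M2 v1p by (simp add: field_simps)
      then show ?thesis by simp
    qed
    finally show ?thesis using l0 lM unfolding T_def by blast
  next
    case False
    define l where "l = 2 * m / M\<^sup>2"
    have l0: "0 \<le> l" unfolding l_def using m by simp
    have lM: "l * M\<^sup>2 \<le> 2 * m" unfolding l_def using M2 by simp
    have ex: "- l * G + l\<^sup>2 * M\<^sup>2 / (2 * m) * v1 = - (2 * m / M\<^sup>2) * (G - v1)"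
      unfolding l_def using m M2 by (simp add: field_simps power2_eq_square)
    also have "\<dots> \<le> - (2 * m / M\<^sup>2) * (G / 2)"
      using False m M2 by (intro mult_left_mono_neg) auto
    also have "\<dots> = - (m * G) / M\<^sup>2" by simp
    also have "\<dots> \<le> - L'"
    proof -
      have "M\<^sup>2 * L' \<le> M\<^sup>2 * (L' + 3/8)" using M2 by (intro mult_left_mono) auto
      then have "M\<^sup>2 * L' \<le> m * G" using mG by linarith
      then have "L' \<le> m * G / M\<^sup>2" using M2 by (simp add: field_simps)
      then show ?thesis by simp
    qed
    finally have "- l * G + l\<^sup>2 * M\<^sup>2 / (2 * m) * v1 \<le> - L'" .
    then have "- l * T + (l + l\<^sup>2 * M\<^sup>2 / (2 * m)) * v \<le> - L'" using mono_v[OF l0] by linarith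
    then show ?thesis using l0 lM unfolding T_def by blast
  qed
qed

lemma sum_pairs: fixes g :: "nat \<Rightarrow> real" and m :: nat
  shows "(\<Sum>k<m. g (2*k) + g (2*k+1)) = (\<Sum>r<2*m. g r)"
  by (induction m) (simp_all add: lessThan_Suc)

context pair_setting begin

definition sig2 where "sig2 = (\<Sum>r<n. sv r) / real n"

lemma sv_bnd: assumes r: "r < n" shows "0 \<le> sv r" "sv r \<le> (b - a)\<^sup>2 / 4"
proof -
  show "0 \<le> sv r" unfolding sv_def by (rule integral_nonneg_AE) auto
  define c where "c = (a + b) / 2"
  have iA: "integrable M (\<lambda>\<omega>. Y r \<omega> - mu r)" "integrable M (\<lambda>\<omega>. (Y r \<omega> - mu r)\<^sup>2)"
    using r by (auto intro: intYc intY2)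
  have eq: "(Y r \<omega> - c)\<^sup>2 = (Y r \<omega> - mu r)\<^sup>2 + 2 * (mu r - c) * (Y r \<omega> - mu r) + (mu r - c)\<^sup>2" for \<omega>
    by (simp add: power2_eq_square algebra_simps)
  have "expectation (\<lambda>\<omega>. (Y r \<omega> - c)\<^sup>2) = expectation (\<lambda>\<omega>. (Y r \<omega> - mu r)\<^sup>2 + 2 * (mu r - c) * (Y r \<omega> - mu r) + (mu r - c)\<^sup>2)"
    by (intro Bochner_Integration.integral_cong refl eq)
  also have "\<dots> = sv r + 2 * (mu r - c) * expectation (\<lambda>\<omega>. Y r \<omega> - mu r) + (mu r - c)\<^sup>2"
    using iA unfolding sv_def by (simp add: prob_space)
  also have "expectation (\<lambda>\<omega>. Y r \<omega> - mu r) = 0" using mu_centered[OF r] .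
  finally have E: "expectation (\<lambda>\<omega>. (Y r \<omega> - c)\<^sup>2) = sv r + (mu r - c)\<^sup>2" by simp
  have "expectation (\<lambda>\<omega>. (Y r \<omega> - c)\<^sup>2) \<le> expectation (\<lambda>\<omega>. (b - a)\<^sup>2 / 4)"
  proof (rule integral_mono_AE)
    show "integrable M (\<lambda>\<omega>. (Y r \<omega> - c)\<^sup>2)" using r by (rule intY2)
    show "integrable M (\<lambda>\<omega>. (b - a)\<^sup>2 / 4)" by simp
    show "AE \<omega> in M. (Y r \<omega> - c)\<^sup>2 \<le> (b - a)\<^sup>2 / 4"
      using bnd[OF r]
    proof (rule eventually_mono)
      fix \<omega> assume y: "a \<le> Y r \<omega> \<and> Y r \<omega> \<le> b"
      then have h: "\<bar>Y r \<omega> - c\<bar> \<le> (b - a) / 2" unfolding c_def abs_le_iff by (auto simp: field_simps)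
      have "\<bar>Y r \<omega> - c\<bar>\<^sup>2 \<le> ((b - a) / 2)\<^sup>2" by (rule power_mono[OF h]) simp
      then have "(Y r \<omega> - c)\<^sup>2 \<le> ((b - a) / 2)\<^sup>2" by simp
      then show "(Y r \<omega> - c)\<^sup>2 \<le> (b - a)\<^sup>2 / 4" by (simp add: power_divide)
    qed
  qed
  then have "sv r + (mu r - c)\<^sup>2 \<le> (b - a)\<^sup>2 / 4" using E by (simp add: prob_space)
  then show "sv r \<le> (b - a)\<^sup>2 / 4" using zero_le_power2[of "mu r - c"] by linarith
qed

lemma sig2_nonneg: "0 \<le> sig2"
  unfolding sig2_def using sv_bnd(1) by (intro divide_nonneg_nonneg sum_nonneg) auto

lemma sig2_le: "sig2 \<le> (b - a)\<^sup>2 / 4"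
proof -
  have "(\<Sum>r<n. sv r) \<le> (\<Sum>r<n. (b - a)\<^sup>2 / 4)" using sv_bnd(2) by (intro sum_mono) auto
  then have "(\<Sum>r<n. sv r) \<le> real n * ((b - a)\<^sup>2 / 4)" by simp
  then show ?thesis unfolding sig2_def using n2 by (simp add: field_simps)
qed

lemma perm_sum: "p permutes {..<n} \<Longrightarrow> (\<Sum>r<n. f (p r)) = (\<Sum>r<n. (f r :: real))"
  by (rule sum.reindex_bij_betw[OF permutes_imp_bij])

lemma sum_2m: assumes p: "p permutes {..<n}" and f: "\<And>r. r < n \<Longrightarrow> 0 \<le> f r \<and> f r \<le> C"
  shows "(\<Sum>r<n. f r) - C \<le> (\<Sum>r<2*m. (f (p r) :: real))" and "(\<Sum>r<2*m. f (p r)) \<le> (\<Sum>r<n. f r)"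
    and "(\<Sum>r<n. f r) \<le> (\<Sum>r<2*m. (f (p r) :: real)) + (real n - 2 * real m) * C"
proof -
  have inS: "x < n \<Longrightarrow> p x < n" for x using permutes_in_image[OF p, of x] by auto
  have fp: "r < n \<Longrightarrow> 0 \<le> f (p r) \<and> f (p r) \<le> C" for r using f inS by auto
  have "(\<Sum>r<n. f r) = (\<Sum>r<n. f (p r))" using perm_sum[OF p] by simp
  also have "\<dots> = (\<Sum>r<2*m. f (p r)) + (\<Sum>r\<in>{2*m..<n}. f (p r))"
  proof -
    have "2*m \<le> n" by linarith
    then show ?thesis using sum.atLeastLessThan_concat[of 0 "2*m" n "\<lambda>r. f (p r)"] by (simp add: atLeast0LessThan)
  qed
  finally have S: "(\<Sum>r<n. f r) = (\<Sum>r<2*m. f (p r)) + (\<Sum>r\<in>{2*m..<n}. f (p r))" .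
  have up: "(\<Sum>r\<in>{2*m..<n}. f (p r)) \<le> (real n - 2 * real m) * C"
  proof -
    have "(\<Sum>r\<in>{2*m..<n}. f (p r)) \<le> (\<Sum>r\<in>{2*m..<n}. C)" using fp by (intro sum_mono) auto
    also have "\<dots> = real (n - 2*m) * C" by simp
    also have "real (n - 2*m) = real n - 2 * real m" by (simp add: of_nat_diff)
    finally show ?thesis .
  qed
  have lo: "0 \<le> (\<Sum>r\<in>{2*m..<n}. f (p r))" using fp by (intro sum_nonneg) auto
  have C0: "0 \<le> C" using f[of 0] n2 by auto
  have nm: "real n - 2 * real m \<le> 1" by linarith
  have "(real n - 2 * real m) * C \<le> 1 * C" using nm C0 by (intro mult_right_mono) auto
  then show "(\<Sum>r<n. f r) - C \<le> (\<Sum>r<2*m. f (p r))" using S up by linarith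
  show "(\<Sum>r<2*m. f (p r)) \<le> (\<Sum>r<n. f r)" using S lo by linarith
  show "(\<Sum>r<n. f r) \<le> (\<Sum>r<2*m. (f (p r) :: real)) + (real n - 2 * real m) * C" using S up by linarith
qed

lemma w_bound: assumes p: "p permutes {..<n}"
  shows "real m * (sig2 - (b - a)\<^sup>2 / (8 * real m)) \<le> (\<Sum>k<m. (sv (p (2*k)) + sv (p (2*k+1))) / 2)"
proof -
  have mp: "0 < real m" using m_pos by simp
  have "(\<Sum>k<m. (sv (p (2*k)) + sv (p (2*k+1))) / 2) = (\<Sum>r<2*m. sv (p r)) / 2"
    using sum_pairs[of "\<lambda>r. sv (p r)" m] by (simp add: sum_divide_distrib[symmetric])
  moreover have "(\<Sum>r<n. sv r) \<le> (\<Sum>r<2*m. sv (p r)) + (real n - 2 * real m) * ((b - a)\<^sup>2 / 4)"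
    using sum_2m(3)[OF p, of sv "(b - a)\<^sup>2 / 4"] sv_bnd by auto
  moreover have "(\<Sum>r<n. sv r) = real n * sig2" unfolding sig2_def using n2 by simp
  moreover have "(real n - 2 * real m) * sig2 \<ge> 0" using sig2_nonneg by (intro mult_nonneg_nonneg) linarith+
  moreover have "(real n - 2 * real m) * ((b - a)\<^sup>2 / 4) \<le> (b - a)\<^sup>2 / 4"
  proof -
    have "real n - 2 * real m \<le> 1" "0 \<le> real n - 2 * real m" by linarith+
    then show ?thesis by (intro mult_left_le_one_le) simp_all
  qed
  moreover have "real m * (sig2 - (b - a)\<^sup>2 / (8 * real m)) = real m * sig2 - (b - a)\<^sup>2 / 8"
    using mp by (simp add: field_simps)
  ultimately show ?thesis by (simp add: algebra_simps)
qed

lemma v_bound: assumes p: "p permutes {..<n}" and D: "\<And>r s. r < n \<Longrightarrow> s < n \<Longrightarrow> \<bar>mu r - mu s\<bar> \<le> 2 * D"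
  shows "(\<Sum>k<m. (sv (p (2*k)) + sv (p (2*k+1)) + (mu (p (2*k)) - mu (p (2*k+1)))\<^sup>2) / 2)
     \<le> real m * (sig2 + (b - a)\<^sup>2 / (8 * real m) + 2 * D\<^sup>2)"
proof -
  have mp: "0 < real m" using m_pos by simp
  have D0: "0 \<le> D" using D[of 0 0] n2 by auto
  have split: "(\<Sum>k<m. (sv (p (2*k)) + sv (p (2*k+1)) + (mu (p (2*k)) - mu (p (2*k+1)))\<^sup>2) / 2)
     = (\<Sum>k<m. (sv (p (2*k)) + sv (p (2*k+1))) / 2) + (\<Sum>k<m. (mu (p (2*k)) - mu (p (2*k+1)))\<^sup>2 / 2)"
    by (simp add: sum.distrib[symmetric] add_divide_distrib)
  have s1: "(\<Sum>k<m. (sv (p (2*k)) + sv (p (2*k+1))) / 2) = (\<Sum>r<2*m. sv (p r)) / 2"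
    using sum_pairs[of "\<lambda>r. sv (p r)" m] by (simp add: sum_divide_distrib[symmetric])
  have s2: "(\<Sum>r<2*m. sv (p r)) \<le> (\<Sum>r<n. sv r)"
    using sum_2m(2)[OF p, of sv "(b - a)\<^sup>2 / 4"] sv_bnd by auto
  have s3: "(\<Sum>r<n. sv r) = real n * sig2" unfolding sig2_def using n2 by simp
  have s4: "(real n - 2 * real m) * sig2 \<le> (b - a)\<^sup>2 / 4"
  proof -
    have "real n - 2 * real m \<le> 1" "0 \<le> real n - 2 * real m" by linarith+
    then have "(real n - 2 * real m) * sig2 \<le> 1 * sig2" using sig2_nonneg by (intro mult_right_mono) auto
    then show ?thesis using sig2_le by linarith
  qed
  have first: "(\<Sum>k<m. (sv (p (2*k)) + sv (p (2*k+1))) / 2) \<le> real m * sig2 + (b - a)\<^sup>2 / 8"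
    using s1 s2 s3 s4 by (simp add: algebra_simps)
  have second: "(\<Sum>k<m. (mu (p (2*k)) - mu (p (2*k+1)))\<^sup>2 / 2) \<le> real m * (2 * D\<^sup>2)"
  proof -
    have "(\<Sum>k<m. (mu (p (2*k)) - mu (p (2*k+1)))\<^sup>2 / 2) \<le> (\<Sum>k<m. 2 * D\<^sup>2)"
    proof (rule sum_mono)
      fix k assume k: "k \<in> {..<m}"
      have pi: "p (2*k) < n \<and> p (2*k+1) < n" using pair_in[OF p, of k] k by auto
      have "\<bar>mu (p (2*k)) - mu (p (2*k+1))\<bar> \<le> \<bar>2 * D\<bar>" using D pi D0 by auto
      then have "(mu (p (2*k)) - mu (p (2*k+1)))\<^sup>2 \<le> (2 * D)\<^sup>2" by (simp add: abs_le_square_iff)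
      then show "(mu (p (2*k)) - mu (p (2*k+1)))\<^sup>2 / 2 \<le> 2 * D\<^sup>2" by (simp add: power_mult_distrib)
    qed
    then show ?thesis by simp
  qed
  have "real m * (sig2 + (b - a)\<^sup>2 / (8 * real m) + 2 * D\<^sup>2) = real m * sig2 + (b - a)\<^sup>2 / 8 + real m * (2 * D\<^sup>2)"
    using mp by (simp add: field_simps)
  then show ?thesis using split first second by linarith
qed

end

context pair_setting begin

lemma U_nonneg: "0 \<le> U \<omega>"
proof -
  have "0 \<le> (\<Sum>i<n. \<Sum>j<n. if i = j then 0 else H i j \<omega>)"
    by (intro sum_nonneg) (auto simp: H_def)
  moreover have "0 < real n * (real n - 1)" using n2 by auto
  ultimately show ?thesis unfolding U_def by simp
qed

lemma common_facts:
  assumes ab: "a < b" and d: "0 < \<delta>" "\<delta> < 1"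
  shows "0 < ln (2 / \<delta>)" "ln (1 / \<delta>) + 1/2 \<le> ln (2 / \<delta>)" "0 \<le> ln (1 / \<delta>)"
    "exp (- ln (1 / \<delta>)) = \<delta>" "0 < sqrt (2 * ln (2 / \<delta>) / real n)"
    "real n - 1 \<le> 2 * real m"
proof -
  have l2: "ln (2 / \<delta>) = ln 2 + ln (1 / \<delta>)" using d by (simp add: ln_div)
  have l1: "0 \<le> ln (1 / \<delta>)" using d by simp
  show "0 \<le> ln (1 / \<delta>)" by (rule l1)
  show "ln (1 / \<delta>) + 1/2 \<le> ln (2 / \<delta>)" using l2 ln2_ge_half by simp
  then show L: "0 < ln (2 / \<delta>)" using l1 by linarith
  show "exp (- ln (1 / \<delta>)) = \<delta>" using d by (simp add: ln_div)
  show "0 < sqrt (2 * ln (2 / \<delta>) / real n)" using L n2 by simp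
  show "real n - 1 \<le> 2 * real m" by linarith
qed

lemma lower_final:
  assumes ab: "a < b" and d: "0 < \<delta>" "\<delta> < 1"
  shows "prob {\<omega>\<in>space M. \<not> (sqrt sig2 * sqrt (2 * ln (2 / \<delta>) / real n) + 2 * (b - a) * ln (2 / \<delta>) / (3 * real n)
          \<le> sqrt (U \<omega>) * sqrt (2 * ln (2 / \<delta>) / real n) + 8 * (b - a) * ln (2 / \<delta>) / (3 * (real n - 1)))} \<le> \<delta>"
proof -
  define L where "L = ln (2 / \<delta>)"
  define L' where "L' = ln (1 / \<delta>)"
  define c where "c = sqrt (2 * L / real n)"
  define Mb where "Mb = b - a"
  define A1 where "A1 = 2 * Mb * L / (3 * real n)"
  define A2 where "A2 = 8 * Mb * L / (3 * (real n - 1))"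
  define s1 where "s1 = (A2 - A1) / c"
  define \<sigma> where "\<sigma> = sqrt sig2"
  note cf = common_facts[OF ab d]
  have L: "0 < L" and LL: "L' + 1/4 \<le> L" and L': "0 \<le> L'" and dL: "exp (- L') = \<delta>" and c: "0 < c"
    and nm: "real n - 1 \<le> 2 * real m"
    using cf unfolding L_def L'_def c_def by auto
  have Mb: "0 < Mb" unfolding Mb_def using ab by simp
  have n1: "0 < real n - 1" using n2 by simp
  have mp: "0 < real m" using m_pos by simp
  have A21: "2 * Mb * L / (real n - 1) \<le> A2 - A1"
  proof -
    define q where "q = 2 * Mb * L / (3 * (real n - 1))"
    have "A1 \<le> q" unfolding A1_def q_def
      using Mb L n1 by (intro divide_left_mono) auto
    moreover have "A2 = 4 * q" unfolding A2_def q_def by simp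
    moreover have "2 * Mb * L / (real n - 1) = 3 * q" unfolding q_def using n1 by (simp add: field_simps)
    ultimately show ?thesis by linarith
  qed
  have s1p: "0 < s1"
  proof -
    have "0 < 2 * Mb * L / (real n - 1)" using Mb L n1 by simp
    then show ?thesis unfolding s1_def using A21 c by simp
  qed
  have F1: "L * Mb\<^sup>2 \<le> real m * s1\<^sup>2"
    unfolding s1_def c_def using alg_F1[of "real n" "real m" Mb L "A2 - A1"] n2 nm Mb L A21 by simp
  have sig: "0 \<le> \<sigma>" unfolding \<sigma>_def using sig2_nonneg by simp
  have sig2eq: "sig2 = \<sigma>\<^sup>2" unfolding \<sigma>_def using sig2_nonneg by simp
  define S where "S = {\<omega>\<in>space M. \<not> (\<sigma> * c + A1 \<le> sqrt (U \<omega>) * c + A2)}"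
  have S_char: "\<omega> \<in> S \<Longrightarrow> sqrt (U \<omega>) < \<sigma> - s1" for \<omega>
  proof -
    assume "\<omega> \<in> S"
    then have "sqrt (U \<omega>) * c < \<sigma> * c - (A2 - A1)" unfolding S_def by auto
    then have "sqrt (U \<omega>) < (\<sigma> * c - (A2 - A1)) / c" using c by (simp add: field_simps)
    also have "(\<sigma> * c - (A2 - A1)) / c = \<sigma> - s1" unfolding s1_def using c by (simp add: field_simps)
    finally show ?thesis .
  qed
  have "prob S \<le> \<delta>"
  proof (cases "\<sigma> \<le> s1")
    case True
    have "S = {}"
    proof (rule ccontr)
      assume "S \<noteq> {}"
      then obtain \<omega> where "\<omega> \<in> S" by auto
      from S_char[OF this] have "sqrt (U \<omega>) < 0" using True by linarith
      then show False using U_nonneg[of \<omega>] by simp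
    qed
    then show ?thesis using d by simp
  next
    case False
    then have ss: "s1 \<le> \<sigma>" and sigp: "0 < \<sigma>" using s1p by auto
    define T where "T = (\<sigma> - s1)\<^sup>2"
    define w where "w = sig2 - Mb\<^sup>2 / (8 * real m)"
    define G where "G = \<sigma> * s1 - Mb\<^sup>2 / (8 * real m)"
    have AL: "\<sigma>\<^sup>2 * Mb\<^sup>2 * L' \<le> real m * G\<^sup>2" "0 < G"
      unfolding G_def using alg_lower[OF mp Mb ss s1p F1 LL L'] by auto
    have wT: "G \<le> w - T"
    proof -
      have "s1 * s1 \<le> \<sigma> * s1" using ss s1p by (intro mult_right_mono) auto
      then show ?thesis unfolding G_def w_def T_def sig2eq by (simp add: power2_eq_square algebra_simps)
    qed
    have ws: "w \<le> \<sigma>\<^sup>2" unfolding w_def sig2eq using mp by simp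
    have T0: "0 \<le> T" unfolding T_def by simp
    define l where "l = 2 * real m * (w - T) / (Mb\<^sup>2 * \<sigma>\<^sup>2)"
    note AE = alg_lower_exp[OF mp Mb sigp wT AL(2) ws T0 AL(1) l_def]
    have "S \<subseteq> {\<omega>\<in>space M. U \<omega> \<le> T}"
    proof
      fix \<omega> assume om: "\<omega> \<in> S"
      have "sqrt (U \<omega>) < \<sigma> - s1" by (rule S_char[OF om])
      then have "(sqrt (U \<omega>))\<^sup>2 \<le> (\<sigma> - s1)\<^sup>2" using U_nonneg[of \<omega>] by (intro power_mono) auto
      then have "U \<omega> \<le> T" unfolding T_def using U_nonneg[of \<omega>] by simp
      then show "\<omega> \<in> {\<omega>\<in>space M. U \<omega> \<le> T}" using om unfolding S_def by auto
    qed
    then have "prob S \<le> prob {\<omega>\<in>space M. U \<omega> \<le> T}"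
      by (intro finite_measure_mono) auto
    also have "\<dots> \<le> exp (l * T - (l - l\<^sup>2 * (b - a)\<^sup>2 / (4 * real m)) * w)"
    proof (rule lower_tail)
      show "0 \<le> l" by (rule AE(2))
      show "l * (b - a)\<^sup>2 \<le> 4 * real m" using AE(3) unfolding Mb_def .
      fix p assume "p permutes {..<n}"
      then show "real m * w \<le> (\<Sum>k<m. (sv (p (2*k)) + sv (p (2*k+1))) / 2)"
        unfolding w_def Mb_def by (rule w_bound)
    qed
    also have "\<dots> \<le> exp (- L')" using AE(1) unfolding Mb_def by simp
    also have "\<dots> = \<delta>" by (rule dL)
    finally show ?thesis .
  qed
  then show ?thesis unfolding S_def \<sigma>_def c_def A1_def A2_def Mb_def L_def .
qed

end

context pair_setting begin

lemma upper_final: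
  assumes ab: "a < b" and d: "0 < \<delta>" "\<delta> < 1"
    and Dmu: "\<And>r s. r < n \<Longrightarrow> s < n \<Longrightarrow> \<bar>mu r - mu s\<bar> \<le> 2 * D"
  shows "prob {\<omega>\<in>space M. \<not> (sqrt (U \<omega>) * sqrt (2 * ln (2 / \<delta>) / real n) + 8 * (b - a) * ln (2 / \<delta>) / (3 * (real n - 1))
          \<le> sqrt sig2 * sqrt (2 * ln (2 / \<delta>) / real n) + 2 * (b - a) * ln (2 / \<delta>) / (3 * real n)
            + (sqrt (4 * ln (2 / \<delta>) / real n) * D + 13 * (b - a) * ln (2 / \<delta>) / (3 * (real n - 1))))} \<le> \<delta>"
proof -
  define L where "L = ln (2 / \<delta>)"
  define L' where "L' = ln (1 / \<delta>)"
  define c where "c = sqrt (2 * L / real n)"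
  define Mb where "Mb = b - a"
  define A1 where "A1 = 2 * Mb * L / (3 * real n)"
  define A2 where "A2 = 8 * Mb * L / (3 * (real n - 1))"
  define A3 where "A3 = 13 * Mb * L / (3 * (real n - 1))"
  define s2 where "s2 = (A1 + A3 - A2) / c"
  define \<sigma> where "\<sigma> = sqrt sig2"
  define R where "R = \<sigma> + sqrt 2 * D"
  note cf = common_facts[OF ab d]
  have L: "0 < L" and LL: "L' + 1/2 \<le> L" and L': "0 \<le> L'" and dL: "exp (- L') = \<delta>" and c: "0 < c"
    and nm: "real n - 1 \<le> 2 * real m"
    using cf unfolding L_def L'_def c_def by auto
  have Mb: "0 < Mb" unfolding Mb_def using ab by simp
  have n1: "0 < real n - 1" using n2 by simp
  have mp: "0 < real m" using m_pos by simp
  have D0: "0 \<le> D" using Dmu[of 0 0] n2 by auto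
  have sig: "0 \<le> \<sigma>" unfolding \<sigma>_def using sig2_nonneg by simp
  have sig2eq: "sig2 = \<sigma>\<^sup>2" unfolding \<sigma>_def using sig2_nonneg by simp
  have R0: "0 \<le> R" unfolding R_def using sig D0 by simp
  have A21: "2 * Mb * L / (real n - 1) \<le> A1 + A3 - A2"
  proof -
    define q where "q = Mb * L / (3 * (real n - 1))"
    have "Mb * L / (3 * (real n - 1)) \<le> 2 * Mb * L / (3 * real n)"
    proof -
      have "0 \<le> Mb * L" using Mb L by simp
      moreover have "real n \<le> 2 * (real n - 1)" using n2 by simp
      ultimately have "Mb * L * real n \<le> 2 * Mb * L * (real n - 1)"
        by (metis mult.assoc mult.commute mult_left_mono)
      then show ?thesis using n1 n2 by (simp add: field_simps)
    qed
    then have "q \<le> A1" unfolding A1_def q_def .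
    moreover have "A3 - A2 = 5 * q" unfolding A2_def A3_def q_def by (simp add: field_simps)
    moreover have "2 * Mb * L / (real n - 1) = 6 * q" unfolding q_def using n1 by (simp add: field_simps)
    ultimately show ?thesis by linarith
  qed
  have s2p: "0 < s2"
  proof -
    have "0 < 2 * Mb * L / (real n - 1)" using Mb L n1 by simp
    then show ?thesis unfolding s2_def using A21 c by simp
  qed
  have F1: "L * Mb\<^sup>2 \<le> real m * s2\<^sup>2"
    unfolding s2_def c_def using alg_F1[of "real n" "real m" Mb L "A1 + A3 - A2"] n2 nm Mb L A21 by simp
  define v where "v = sig2 + Mb\<^sup>2 / (8 * real m) + 2 * D\<^sup>2"
  have vle: "v \<le> R\<^sup>2 + Mb\<^sup>2 / (8 * real m)"
  proof -
    have "R\<^sup>2 = \<sigma>\<^sup>2 + 2 * sqrt 2 * \<sigma> * D + 2 * D\<^sup>2" unfolding R_def by (simp add: power2_eq_square algebra_simps)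
    moreover have "0 \<le> 2 * sqrt 2 * \<sigma> * D" using sig D0 by simp
    ultimately show ?thesis unfolding v_def sig2eq by simp
  qed
  obtain l where l: "0 \<le> l" "l * Mb\<^sup>2 \<le> 2 * real m" "- l * (R + s2)\<^sup>2 + (l + l\<^sup>2 * Mb\<^sup>2 / (2 * real m)) * v \<le> - L'"
    using alg_upper[OF mp Mb R0 s2p F1 LL L' vle] by blast
  have c4: "sqrt (4 * L / real n) = sqrt 2 * c"
  proof -
    have "4 * L / real n = 2 * (2 * L / real n)" by simp
    then have "sqrt (4 * L / real n) = sqrt (2 * (2 * L / real n))" by simp
    also have "\<dots> = sqrt 2 * sqrt (2 * L / real n)" by (rule real_sqrt_mult)
    finally show ?thesis unfolding c_def .
  qed
  define S where "S = {\<omega>\<in>space M. \<not> (sqrt (U \<omega>) * c + A2 \<le> \<sigma> * c + A1 + (sqrt (4 * L / real n) * D + A3))}"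
  have "S \<subseteq> {\<omega>\<in>space M. (R + s2)\<^sup>2 \<le> U \<omega>}"
  proof
    fix \<omega> assume om: "\<omega> \<in> S"
    then have h: "\<sigma> * c + A1 + (sqrt 2 * c * D + A3) < sqrt (U \<omega>) * c + A2"
      unfolding S_def c4 by auto
    have "(R + s2) * c = \<sigma> * c + sqrt 2 * c * D + (A1 + A3 - A2)"
      unfolding R_def s2_def using c by (simp add: field_simps)
    then have "(R + s2) * c < sqrt (U \<omega>) * c" using h by linarith
    then have "R + s2 < sqrt (U \<omega>)" using c by simp
    then have "(R + s2)\<^sup>2 \<le> (sqrt (U \<omega>))\<^sup>2" using R0 s2p by (intro power_mono) auto
    then have "(R + s2)\<^sup>2 \<le> U \<omega>" using U_nonneg[of \<omega>] by simp
    then show "\<omega> \<in> {\<omega>\<in>space M. (R + s2)\<^sup>2 \<le> U \<omega>}" using om unfolding S_def by auto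
  qed
  then have "prob S \<le> prob {\<omega>\<in>space M. (R + s2)\<^sup>2 \<le> U \<omega>}"
    by (intro finite_measure_mono) auto
  also have "\<dots> \<le> exp (- l * (R + s2)\<^sup>2 + (l + l\<^sup>2 * (b - a)\<^sup>2 / (2 * real m)) * v)"
  proof (rule upper_tail)
    show "0 \<le> l" by (rule l(1))
    show "l * (b - a)\<^sup>2 \<le> 2 * real m" using l(2) unfolding Mb_def .
    fix p assume "p permutes {..<n}"
    then show "(\<Sum>k<m. (sv (p (2*k)) + sv (p (2*k+1)) + (mu (p (2*k)) - mu (p (2*k+1)))\<^sup>2) / 2) \<le> real m * v"
      unfolding v_def Mb_def by (rule v_bound) (rule Dmu)
  qed
  also have "\<dots> \<le> exp (- L')" using l(3) unfolding Mb_def by simp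
  also have "\<dots> = \<delta>" by (rule dL)
  finally have "prob S \<le> \<delta>" .
  then show ?thesis unfolding S_def \<sigma>_def c_def A1_def A2_def A3_def Mb_def L_def .
qed

end

lemma var_identity:
  fixes y :: "nat \<Rightarrow> real" assumes n: "0 < n"
  shows "(\<Sum>i<n. \<Sum>j<n. if i = j then 0 else (y i - y j)\<^sup>2 / 2) = real n * (\<Sum>i<n. (y i - (\<Sum>j<n. y j) / real n)\<^sup>2)"
proof -
  define S1 where "S1 = (\<Sum>i<n. y i)"
  define S2 where "S2 = (\<Sum>i<n. (y i)\<^sup>2)"
  have "(\<Sum>i<n. \<Sum>j<n. if i = j then 0 else (y i - y j)\<^sup>2 / 2) = (\<Sum>i<n. \<Sum>j<n. (y i - y j)\<^sup>2 / 2)"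
    by (intro sum.cong refl) auto
  also have "\<dots> = (\<Sum>i<n. \<Sum>j<n. (y i)\<^sup>2 / 2 - y i * y j + (y j)\<^sup>2 / 2)"
    by (intro sum.cong refl) (simp add: power2_eq_square field_simps)
  also have "\<dots> = (\<Sum>i<n. real n * (y i)\<^sup>2 / 2 - y i * S1 + S2 / 2)"
    unfolding S1_def S2_def by (intro sum.cong refl) (simp add: sum.distrib sum_subtractf sum_distrib_left sum_divide_distrib)
  also have "\<dots> = real n * S2 / 2 - S1 * S1 + real n * S2 / 2"
  proof -
    have a: "(\<Sum>i<n. real n * (y i)\<^sup>2 / 2) = real n * S2 / 2" unfolding S2_def by (simp add: sum_distrib_left sum_divide_distrib)
    have b: "(\<Sum>i<n. y i * S1) = S1 * S1" unfolding S1_def by (simp add: sum_distrib_right)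
    have c: "(\<Sum>i<n. S2 / 2) = real n * S2 / 2" by simp
    show ?thesis by (simp only: sum.distrib sum_subtractf a b c)
  qed
  finally have A: "(\<Sum>i<n. \<Sum>j<n. if i = j then 0 else (y i - y j)\<^sup>2 / 2) = real n * S2 - S1 * S1" by simp
  have "(\<Sum>i<n. (y i - S1 / real n)\<^sup>2) = (\<Sum>i<n. (y i)\<^sup>2 - 2 * (S1 / real n) * y i + (S1 / real n)\<^sup>2)"
    by (intro sum.cong refl) (simp add: power2_eq_square algebra_simps)
  also have "\<dots> = S2 - 2 * (S1 / real n) * S1 + real n * (S1 / real n)\<^sup>2"
    unfolding S1_def S2_def by (simp add: sum.distrib sum_subtractf sum_distrib_left)
  also have "\<dots> = S2 - S1 * S1 / real n"
    using n by (simp add: power2_eq_square field_simps)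
  finally have B: "(\<Sum>i<n. (y i - S1 / real n)\<^sup>2) = S2 - S1 * S1 / real n" .
  show ?thesis unfolding A using B n unfolding S1_def[symmetric] by (simp add: field_simps)
qed

theorem mainTheorem2:
  fixes P :: "'a measure" and a b :: real and t k :: nat and \<delta> :: real
    and Q :: "nat \<Rightarrow> real measure" and B :: "nat \<Rightarrow> nat"
    and u :: "nat \<Rightarrow> nat \<Rightarrow> 'a \<Rightarrow> real"
  assumes P: "prob_space P"
    and ab: "a < b"
    and t: "1 \<le> t"
    and Q: "\<And>j. j \<in> {1..t} \<Longrightarrow> prob_space (Q j) \<and> sets (Q j) = sets borel \<and> emeasure (Q j) {a..b} = 1"
    and Bpos: "\<And>j. j \<in> {1..t} \<Longrightarrow> 1 \<le> B j"
    and meas: "\<And>j i. j \<in> {1..t} \<Longrightarrow> i \<in> {1..B j} \<Longrightarrow> u j i \<in> borel_measurable P"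
    and distr: "\<And>j i. j \<in> {1..t} \<Longrightarrow> i \<in> {1..B j} \<Longrightarrow> distr P borel (u j i) = Q j"
    and indep: "prob_space.indep_vars P (\<lambda>_. borel) (\<lambda>(j, i). u j i) (SIGMA j:{1..t}. {1..B j})"
    and k: "k \<in> {1..t}"
    and \<delta>: "0 < \<delta>" "\<delta> < 1"
  shows "measure P {\<omega> \<in> space P. psi (b - a) Q B t k \<delta> \<le> psihat (b - a) u B t k \<delta> \<omega>} \<ge> 1 - \<delta>
       \<and> measure P {\<omega> \<in> space P. psihat (b - a) u B t k \<delta> \<omega> \<le> psi (b - a) Q B t k \<delta> + xi (b - a) Q B t k \<delta>} \<ge> 1 - \<delta>"
proof -
  interpret P: prob_space P by (rule P)
  define W where "W = {t-k+1..t}"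
  define n where "n = Btk B t k"
  have Wsub: "W \<subseteq> {1..t}" unfolding W_def using k by auto
  have tW: "t \<in> W" unfolding W_def using k by auto
  have finW: "finite W" unfolding W_def by simp
  have n_sum: "n = (\<Sum>j\<in>W. B j)" unfolding n_def Btk_def W_def ..
  have n1: "1 \<le> n"
  proof -
    have "B t \<le> (\<Sum>j\<in>W. B j)" using tW finW by (intro member_le_sum) auto
    moreover have "1 \<le> B t" using Bpos t by auto
    ultimately show ?thesis unfolding n_sum by simp
  qed
  show ?thesis
  proof (cases "n = 1")
    case True
    then have B1: "Btk B t k = 1" unfolding n_def .
    have e1: "{\<omega> \<in> space P. psi (b - a) Q B t k \<delta> \<le> psihat (b - a) u B t k \<delta> \<omega>} = space P"
      unfolding psi_def psihat_def B1 by simp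
    have e2: "{\<omega> \<in> space P. psihat (b - a) u B t k \<delta> \<omega> \<le> psi (b - a) Q B t k \<delta> + xi (b - a) Q B t k \<delta>} = space P"
      unfolding psi_def psihat_def xi_def B1 by simp
    show ?thesis unfolding e1 e2 using \<delta> by (simp add: P.prob_space)
  next
    case False
    with n1 have n2: "2 \<le> n" by simp
    define I where "I = (SIGMA j:W. {1..B j})"
    have finI: "finite I" unfolding I_def using finW by auto
    have cardI: "card I = n" unfolding I_def n_sum using finW by simp
    obtain e where e: "bij_betw e {..<n} I"
      using ex_bij_betw_nat_finite[OF finI] cardI by (auto simp: atLeast0LessThan)
    have eI: "r < n \<Longrightarrow> fst (e r) \<in> {1..t} \<and> snd (e r) \<in> {1..B (fst (e r))}" for r
    proof -
      assume "r < n"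
      then have "e r \<in> I" using e by (auto simp: bij_betw_def)
      then show ?thesis unfolding I_def using Wsub by (cases "e r") auto
    qed
    define X where "X = (\<lambda>(j, i). u j i)"
    define Y where "Y = (\<lambda>r. u (fst (e r)) (snd (e r)))"
    have YX: "Y r = X (e r)" for r unfolding Y_def X_def by (simp add: split_beta)
    have indY: "P.indep_vars (\<lambda>_. borel) Y {..<n}"
    proof -
      have Ksub: "{e r} \<subseteq> (SIGMA j:{1..t}. {1..B j})" if "r \<in> {..<n}" for r
        using eI[of r] that by (cases "e r") auto
      have disj: "disjoint_family_on (\<lambda>r. {e r}) {..<n}"
        using e unfolding disjoint_family_on_def bij_betw_def inj_on_def by auto
      have R: "P.indep_vars (\<lambda>r. PiM {e r} (\<lambda>_. borel)) (\<lambda>r \<omega>. restrict (\<lambda>i. X i \<omega>) {e r}) {..<n}"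
        by (rule P.indep_vars_restrict[OF indep[folded X_def] Ksub disj])
      have Fm: "(\<lambda>f. f (e r)) \<in> measurable (PiM {e r} (\<lambda>_. borel)) borel" for r
        by (rule measurable_component_singleton) simp
      have C: "P.indep_vars (\<lambda>_. borel) (\<lambda>r \<omega>. (\<lambda>f. f (e r)) (restrict (\<lambda>i. X i \<omega>) {e r})) {..<n}"
        by (rule P.indep_vars_compose2[OF R Fm])
      show ?thesis
        by (rule P.indep_vars_cong[THEN iffD1, OF refl _ refl C]) (auto simp: YX fun_eq_iff)
    qed
    have bndY: "AE \<omega> in P. a \<le> Y r \<omega> \<and> Y r \<omega> \<le> b" if r: "r < n" for r
    proof -
      define j where "j = fst (e r)"
      define i where "i = snd (e r)"
      have ji: "j \<in> {1..t}" "i \<in> {1..B j}" using eI[OF r] unfolding j_def i_def by auto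
      interpret Qj: prob_space "Q j" using Q[OF ji(1)] by auto
      have sQ: "sets (Q j) = sets borel" using Q[OF ji(1)] by auto
      have "emeasure (Q j) {a..b} = 1" using Q[OF ji(1)] by auto
      then have p1: "Qj.prob {a..b} = 1" by (simp add: Qj.emeasure_eq_measure)
      have s1: "{a..b} \<in> sets (Q j)" using sQ by simp
      have "AE x in Q j. x \<in> {a..b}" using Qj.AE_in_set_eq_1[OF s1] p1 by blast
      then have "AE x in distr P borel (u j i). x \<in> {a..b}" unfolding distr[OF ji] .
      then have "AE \<omega> in P. u j i \<omega> \<in> {a..b}"
        by (subst (asm) AE_distr_iff) (use meas[OF ji] in auto)
      then show ?thesis unfolding Y_def j_def i_def by (rule eventually_mono) auto
    qed
    interpret PS: pair_setting P n Y a b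
      by unfold_locales (use indY bndY n2 in auto)
    have sumI: "(\<Sum>j\<in>W. \<Sum>i\<in>{1..B j}. f j i) = (\<Sum>r<n. f (fst (e r)) (snd (e r)))" for f :: "nat \<Rightarrow> nat \<Rightarrow> real"
    proof -
      have "(\<Sum>j\<in>W. \<Sum>i\<in>{1..B j}. f j i) = (\<Sum>x\<in>I. f (fst x) (snd x))"
        unfolding I_def using finW by (simp add: sum.Sigma split_beta)
      also have "\<dots> = (\<Sum>r<n. f (fst (e r)) (snd (e r)))"
        by (rule sum.reindex_bij_betw[OF e, symmetric])
      finally show ?thesis .
    qed
    have Ymeas: "r < n \<Longrightarrow> Y r \<in> borel_measurable P" for r unfolding Y_def using eI meas by auto
    have muE: "PS.mu r = dmean (Q (fst (e r)))" if r: "r < n" for r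
    proof -
      have ji: "fst (e r) \<in> {1..t}" "snd (e r) \<in> {1..B (fst (e r))}" using eI[OF r] by auto
      have "PS.mu r = (\<integral>\<omega>. Y r \<omega> \<partial>P)" unfolding PS.mu_def ..
      also have "\<dots> = (\<integral>x. x \<partial>distr P borel (Y r))" by (rule integral_distr[symmetric]) (use Ymeas[OF r] in auto)
      also have "distr P borel (Y r) = Q (fst (e r))" unfolding Y_def by (rule distr[OF ji])
      finally show ?thesis unfolding dmean_def .
    qed
    have svE: "PS.sv r = dvar (Q (fst (e r)))" if r: "r < n" for r
    proof -
      have ji: "fst (e r) \<in> {1..t}" "snd (e r) \<in> {1..B (fst (e r))}" using eI[OF r] by auto
      have "PS.sv r = (\<integral>\<omega>. (Y r \<omega> - dmean (Q (fst (e r))))\<^sup>2 \<partial>P)" unfolding PS.sv_def muE[OF r] ..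
      also have "\<dots> = (\<integral>x. (x - dmean (Q (fst (e r))))\<^sup>2 \<partial>distr P borel (Y r))" by (rule integral_distr[symmetric]) (use Ymeas[OF r] in auto)
      also have "distr P borel (Y r) = Q (fst (e r))" unfolding Y_def by (rule distr[OF ji])
      finally show ?thesis unfolding dvar_def .
    qed
    have sigE: "PS.sig2 = sigma2tk Q B t k"
    proof -
      have "(\<Sum>j\<in>W. real (B j) * dvar (Q j)) = (\<Sum>j\<in>W. \<Sum>i\<in>{1..B j}. dvar (Q j))" by simp
      also have "\<dots> = (\<Sum>r<n. dvar (Q (fst (e r))))" by (rule sumI)
      also have "\<dots> = (\<Sum>r<n. PS.sv r)" by (intro sum.cong refl) (simp add: svE)
      finally show ?thesis unfolding sigma2tk_def PS.sig2_def W_def[symmetric] n_def[symmetric] by simp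
    qed
    have vE: "vhat u B t k \<omega> = sqrt (PS.U \<omega>)" for \<omega>
    proof -
      define y where "y r = Y r \<omega>" for r
      have mh: "muhat u B t k \<omega> = (\<Sum>r<n. y r) / real n"
        unfolding muhat_def W_def[symmetric] n_def[symmetric] sumI y_def Y_def ..
      have "(\<Sum>j\<in>W. \<Sum>i\<in>{1..B j}. (u j i \<omega> - muhat u B t k \<omega>)\<^sup>2) = (\<Sum>r<n. (y r - (\<Sum>r<n. y r) / real n)\<^sup>2)"
        unfolding sumI mh y_def Y_def ..
      moreover have "PS.U \<omega> = (\<Sum>r<n. (y r - (\<Sum>r<n. y r) / real n)\<^sup>2) / (real n - 1)"
      proof -
        have "PS.U \<omega> = (\<Sum>i<n. \<Sum>j<n. if i = j then 0 else (y i - y j)\<^sup>2 / 2) / (real n * (real n - 1))"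
          unfolding PS.U_def PS.H_def y_def ..
        also have "\<dots> = real n * (\<Sum>r<n. (y r - (\<Sum>r<n. y r) / real n)\<^sup>2) / (real n * (real n - 1))"
          using var_identity[of n y] n2 by simp
        also have "\<dots> = (\<Sum>r<n. (y r - (\<Sum>r<n. y r) / real n)\<^sup>2) / (real n - 1)"
          using n2 by simp
        finally show ?thesis .
      qed
      ultimately show ?thesis unfolding vhat_def W_def[symmetric] n_def[symmetric] by simp
    qed
    define D where "D = Max ((\<lambda>j. \<bar>dmean (Q j) - dmean (Q t)\<bar>) ` W)"
    have Dmu: "\<bar>PS.mu r - PS.mu s\<bar> \<le> 2 * D" if "r < n" "s < n" for r s
    proof -
      have eI2: "e r \<in> I" "e s \<in> I" using e that unfolding bij_betw_def by auto
      have fw: "fst (e r) \<in> W" "fst (e s) \<in> W"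
        using eI2 unfolding I_def by (cases "e r", cases "e s", auto)
      have "\<bar>dmean (Q (fst (e r))) - dmean (Q t)\<bar> \<le> D" unfolding D_def using fw finW by (intro Max_ge) auto
      moreover have "\<bar>dmean (Q (fst (e s))) - dmean (Q t)\<bar> \<le> D" unfolding D_def using fw finW by (intro Max_ge) auto
      ultimately show ?thesis using muE that by simp
    qed
    have Bn: "Btk B t k \<noteq> 1" using False unfolding n_def .
    have psiE: "psi (b - a) Q B t k \<delta> = sqrt PS.sig2 * sqrt (2 * ln (2 / \<delta>) / real n) + 2 * (b - a) * ln (2 / \<delta>) / (3 * real n)"
      unfolding psi_def sigE[symmetric] n_def[symmetric] using False by simp
    have psihatE: "psihat (b - a) u B t k \<delta> \<omega> = sqrt (PS.U \<omega>) * sqrt (2 * ln (2 / \<delta>) / real n) + 8 * (b - a) * ln (2 / \<delta>) / (3 * (real n - 1))" for \<omega>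
      unfolding psihat_def vE n_def[symmetric] using False by simp
    have xiE: "xi (b - a) Q B t k \<delta> = sqrt (4 * ln (2 / \<delta>) / real n) * D + 13 * (b - a) * ln (2 / \<delta>) / (3 * (real n - 1))"
      unfolding xi_def D_def W_def n_def[symmetric] using False by simp
    define c where "c = sqrt (2 * ln (2 / \<delta>) / real n)"
    define A1 where "A1 = 2 * (b - a) * ln (2 / \<delta>) / (3 * real n)"
    define A2 where "A2 = 8 * (b - a) * ln (2 / \<delta>) / (3 * (real n - 1))"
    define A3 where "A3 = sqrt (4 * ln (2 / \<delta>) / real n) * D + 13 * (b - a) * ln (2 / \<delta>) / (3 * (real n - 1))"
    define B1 where "B1 = {\<omega>\<in>space P. \<not> (sqrt PS.sig2 * c + A1 \<le> sqrt (PS.U \<omega>) * c + A2)}"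
    define B2 where "B2 = {\<omega>\<in>space P. \<not> (sqrt (PS.U \<omega>) * c + A2 \<le> sqrt PS.sig2 * c + A1 + A3)}"
    have Um: "PS.U \<in> borel_measurable P" by (rule PS.Umeas)
    have B1m: "B1 \<in> P.events" unfolding B1_def using Um by measurable
    have B2m: "B2 \<in> P.events" unfolding B2_def using Um by measurable
    have e1: "{\<omega> \<in> space P. psi (b - a) Q B t k \<delta> \<le> psihat (b - a) u B t k \<delta> \<omega>} = space P - B1"
      unfolding psiE psihatE B1_def c_def A1_def A2_def by auto
    have e2: "{\<omega> \<in> space P. psihat (b - a) u B t k \<delta> \<omega> \<le> psi (b - a) Q B t k \<delta> + xi (b - a) Q B t k \<delta>} = space P - B2"
      unfolding psiE psihatE xiE B2_def c_def A1_def A2_def A3_def by auto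
    have p1: "measure P B1 \<le> \<delta>"
      unfolding B1_def c_def A1_def A2_def by (rule PS.lower_final[OF ab \<delta>])
    have p2: "measure P B2 \<le> \<delta>"
      unfolding B2_def c_def A1_def A2_def A3_def by (rule PS.upper_final[OF ab \<delta> Dmu])
    show ?thesis unfolding e1 e2 using P.prob_compl[OF B1m] P.prob_compl[OF B2m] p1 p2 by simp
  qed
qed

end
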